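(* An element $\mathsf{v} \in \mathfrak A_d$ of degree at most $h$ is $(d, h, N)$-reachable if and only if there is a time-series $x \in (\mathtt{K}^d)^N$ such that $\log_{\bullet_h}\Phi^{*}_H \mathrm{DS}^{\leq h}(x) = \mathsf{v}$.
   Context: $\mathtt{K}$ is an algebraically closed field of characteristic zero, $\mathfrak A_d=\mathtt{K}[X_1,\dots,X_d]/\{\text{constants}\}$ with basis the non-constant monomials (identified with nonempty multisets on $[d]$, graded by degree). Words $\mathsf{e}_1\bullet\cdots\bullet\mathsf{e}_k$ in monomials form a basis of $T(\mathfrak A_d)$, with height $\|w\|_{\mathrm{ht}}$ = sum of degrees and length $|w|=k$; $T((\mathfrak A_d))$ is the space of formal series of words, paired with $T(\mathfrak A_d)$ by $\langle\sum_w\alpha_w w,v\rangle=\alpha_v$; $T^{\le h}$ denotes truncation to height $\le h$, with truncated concatenation $\bullet_h$ and $\log_{\bullet_h}(\mathsf{u})=\sum_{n\ge1}\frac{(-1)^{n-1}}{n}(\mathsf{u}-\varepsilon)^{\bullet_h n}$. For a time-series $x=(x_1,\dots,x_N)\in(\mathtt{K}^d)^N$ (the paper works with the increments directly), the discrete signature $\mathrm{DS}(x)\in T((\mathfrak A_d))$ is $\langle \mathrm{DS}(x),\mathsf{e}_1\bullet\cdots\bullet\mathsf{e}_k\rangle=\sum_{1\le i_1<\cdots<i_k\le N}\mathsf{e}_1(x_{i_1})\cdots\mathsf{e}_k(x_{i_k})$, and $\mathrm{DS}^{\le h}(x)$ is its truncation to height $\le h$. The Hoffman map is $\Phi_H(w)=\sum_{\alpha\in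 C(|w|)}\frac{1}{\alpha!}(w)_\alpha$, summing over compositions $\alpha$ of $|w|$, with $(w)_\alpha$ the word obtained by multiplying consecutive blocks of letters according to $\alpha$ and $\alpha!=\prod\alpha_i!$; its adjoint $\Phi_H^*$ is multiplicative for $\bullet$ with $\Phi_H^*(i)=\sum_{n\ge1}\frac1{n!}\sum_{i_1\cdots i_n=i}i_1\bullet\cdots\bullet i_n$. The Lie bracket is $[\mathsf{a},\mathsf{b}]=\mathsf{a}\bullet_h\mathsf{b}-\mathsf{b}\bullet_h\mathsf{a}$ and Lie polynomials $\mathfrak l_w$ are defined by $\mathfrak l_I=I$ for a monomial $I$ and $\mathfrak l_{\mathsf{e}_1\bullet u}=[\mathsf{e}_1,\mathfrak l_u]$. With the shuffle product $\sqcup\!\sqcup$ (recursively $w\bullet i\ \sqcup\!\sqcup\ v\bullet j=(w\ \sqcup\!\sqcup\ v\bullet j)\bullet i+(w\bullet i\ \sqcup\!\sqcup\ v)\bullet j$, $\varepsilon$ a unit), the deconcatenation coproduct $\delta$ and $\tilde\delta=\delta-\mathrm{id}\otimes1-1\otimes\mathrm{id}$, the shuffle Eulerian map is $e_1^{\sqcup\!\sqcup}=\sum_{n\ge1}\frac{(-1)^{n-1}}{n}(\sqcup\!\sqcup)^{\circ(n-1)}\circ\tilde\delta^{\circ(n-1)}$. An element $\mathsf{v}\in\mathfrak A_d$ of degree $\le h$ is called $(d,h,N)$-reachable if there is $x\in(\mathtt{K}^d)^N$ with $\langle\mathrm{DS}(x),I\rangle=\langle\mathsf{v},I\rangle$ for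 all monomials $I$ of degree $\le h$ and $\langle\mathrm{DS}(x),\Phi_H e_1^{\sqcup\!\sqcup}(\mathfrak l_w)\rangle=0$ for all words $w$ with $\|w\|_{\mathrm{ht}}\le h$ and $|w|\ge2$. *)

theory Defs
  imports "HOL-Library.Multiset" "HOL-Computational_Algebra.Polynomial"
begin

text \<open>A letter (basis element of A_d) is a non-constant monomial, i.e. a nonempty
multiset of variable indices; a word is a list of letters. Elements of
T((A_d)) (and polynomials in T(A_d)) are coefficient functions on words.\<close>

type_synonym letter = "nat multiset"
type_synonym word = "nat multiset list"
type_synonym 'k ser = "word \<Rightarrow> 'k"

definition is_letter :: "nat \<Rightarrow> letter \<Rightarrow> bool" where
  "is_letter d I \<longleftrightarrow> I \<noteq> {#} \<and> set_mset I \<subseteq> {..<d}"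

definition is_word :: "nat \<Rightarrow> word \<Rightarrow> bool" where
  "is_word d w \<longleftrightarrow> (\<forall>I\<in>set w. is_letter d I)"

definition ht :: "word \<Rightarrow> nat" where
  "ht w = sum_list (map size w)"

text \<open>v is an element of A_d of degree at most h (embedded as combination of one-letter words).\<close>
definition in_Ad_deg :: "nat \<Rightarrow> nat \<Rightarrow> 'k::zero ser \<Rightarrow> bool" where
  "in_Ad_deg d h v \<longleftrightarrow> (\<forall>u. v u \<noteq> 0 \<longrightarrow> (\<exists>I. u = [I] \<and> is_letter d I \<and> size I \<le> h))"

definition wordp :: "word \<Rightarrow> 'k::{zero,one} ser" where
  "wordp w = (\<lambda>u. if u = w then 1 else 0)"

definition unit_ser :: "'k::{zero,one} ser" where
  "unit_ser = wordp []"

definition pair :: "'k::comm_ring_1 ser \<Rightarrow> 'k ser \<Rightarrow> 'k" where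
  "pair S p = (\<Sum>u\<in>{u. p u \<noteq> 0}. S u * p u)"

definition lin :: "(word \<Rightarrow> 'k::comm_ring_1 ser) \<Rightarrow> 'k ser \<Rightarrow> 'k ser" where
  "lin f p = (\<lambda>u. \<Sum>w\<in>{w. p w \<noteq> 0}. p w * f w u)"

definition trunc :: "nat \<Rightarrow> 'k::zero ser \<Rightarrow> 'k ser" where
  "trunc h a = (\<lambda>w. if ht w \<le> h then a w else 0)"

definition conc_h :: "nat \<Rightarrow> 'k::comm_ring_1 ser \<Rightarrow> 'k ser \<Rightarrow> 'k ser" where
  "conc_h h a b = (\<lambda>w. if ht w \<le> h then (\<Sum>k\<le>length w. a (take k w) * b (drop k w)) else 0)"

fun pow_h :: "nat \<Rightarrow> nat \<Rightarrow> 'k::comm_ring_1 ser \<Rightarrow> 'k ser" where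
  "pow_h h 0 a = trunc h unit_ser"
| "pow_h h (Suc n) a = conc_h h a (pow_h h n a)"

text \<open>log_{\<bullet>_h}(u) = sum_{n>=1} (-1)^(n-1)/n (u - eps)^{\<bullet>_h n}; on T^{<=h} the terms
with n > h vanish (u has eps-coefficient 1), so the sum is finite.\<close>
definition logh :: "nat \<Rightarrow> 'k::field ser \<Rightarrow> 'k ser" where
  "logh h u = (\<lambda>w. \<Sum>n\<in>{1..h}. ((-1) ^ (n - 1) / of_nat n) * pow_h h n (\<lambda>z. u z - unit_ser z) w)"

definition evalm :: "letter \<Rightarrow> (nat \<Rightarrow> 'k::comm_ring_1) \<Rightarrow> 'k" where
  "evalm I y = prod_mset (image_mset y I)"

text \<open>x i j is the j-th coordinate of the i-th point (i < N, j < d).\<close>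
definition DS :: "nat \<Rightarrow> (nat \<Rightarrow> nat \<Rightarrow> 'k::comm_ring_1) \<Rightarrow> 'k ser" where
  "DS N x w = (\<Sum>S\<in>{S. S \<subseteq> {0..<N} \<and> card S = length w}.
       \<Prod>j<length w. evalm (w ! j) (x (sorted_list_of_set S ! j)))"

definition comps :: "nat \<Rightarrow> nat list set" where
  "comps n = {\<alpha>. sum_list \<alpha> = n \<and> (\<forall>a\<in>set \<alpha>. 0 < a)}"

fun contract :: "nat list \<Rightarrow> word \<Rightarrow> word" where
  "contract [] w = []"
| "contract (a # \<alpha>) w = sum_list (take a w) # contract \<alpha> (drop a w)"

definition hoffman :: "word \<Rightarrow> 'k::field_char_0 ser" where
  "hoffman w = (\<lambda>u. \<Sum>\<alpha>\<in>comps (length w).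
      if contract \<alpha> w = u then 1 / of_nat (prod_list (map fact \<alpha>)) else 0)"

definition hoffman_adj :: "'k::field_char_0 ser \<Rightarrow> 'k ser" where
  "hoffman_adj S = (\<lambda>w. pair S (hoffman w))"

definition bracket :: "nat \<Rightarrow> 'k::comm_ring_1 ser \<Rightarrow> 'k ser \<Rightarrow> 'k ser" where
  "bracket h a b = (\<lambda>w. conc_h h a b w - conc_h h b a w)"

fun lie :: "nat \<Rightarrow> word \<Rightarrow> 'k::comm_ring_1 ser" where
  "lie h [] = (\<lambda>_. 0)"
| "lie h [I] = wordp [I]"
| "lie h (e # e' # u) = bracket h (wordp [e]) (lie h (e' # u))"

text \<open>Shuffle of words, as a list of words with multiplicity, via the recursion
w.i sh v.j = (w sh v.j).i + (w.i sh v).j (implemented on reversed words).\<close>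
fun shuf_rev :: "word \<Rightarrow> word \<Rightarrow> word list" where
  "shuf_rev [] v = [v]"
| "shuf_rev w [] = [w]"
| "shuf_rev (i # w) (j # v) = map (Cons i) (shuf_rev w (j # v)) @ map (Cons j) (shuf_rev (i # w) v)"

definition shuffle_w :: "word \<Rightarrow> word \<Rightarrow> 'k::comm_ring_1 ser" where
  "shuffle_w u v = (\<lambda>z. of_nat (count_list (map rev (shuf_rev (rev u) (rev v))) z))"

definition shuffle_p :: "'k::comm_ring_1 ser \<Rightarrow> 'k ser \<Rightarrow> 'k ser" where
  "shuffle_p p q = (\<lambda>z. \<Sum>u\<in>{u. p u \<noteq> 0}. \<Sum>v\<in>{v. q v \<noteq> 0}. p u * q v * shuffle_w u v z)"

fun shuffle_list :: "word list \<Rightarrow> 'k::comm_ring_1 ser" where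
  "shuffle_list [] = unit_ser"
| "shuffle_list (u # us) = shuffle_p (wordp u) (shuffle_list us)"

text \<open>Iterated reduced coproduct: decompositions into n nonempty consecutive factors.\<close>
definition decomps :: "nat \<Rightarrow> word \<Rightarrow> word list set" where
  "decomps n w = {ps. length ps = n \<and> concat ps = w \<and> (\<forall>p\<in>set ps. p \<noteq> [])}"

definition euler_w :: "word \<Rightarrow> 'k::field_char_0 ser" where
  "euler_w w = (\<lambda>z. \<Sum>n\<in>{1..length w}. ((-1) ^ (n - 1) / of_nat n) *
       (\<Sum>ps\<in>decomps n w. shuffle_list ps z))"

definition reachable :: "nat \<Rightarrow> nat \<Rightarrow> nat \<Rightarrow> 'k::field_char_0 ser \<Rightarrow> bool" where
  "reachable d h N v \<longleftrightarrow> (\<exists>x.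
     (\<forall>I. is_letter d I \<and> size I \<le> h \<longrightarrow> DS N x [I] = v [I]) \<and>
     (\<forall>w. is_word d w \<and> ht w \<le> h \<and> 2 \<le> length w \<longrightarrow>
        pair (DS N x) (lin hoffman (lin euler_w (lie h w))) = 0))"

end

theory Submission
  imports Defs
begin


fun SH :: "'a list \<Rightarrow> 'a list \<Rightarrow> 'a list multiset" where
  "SH [] v = {#v#}"
| "SH u [] = {#u#}"
| "SH (a # u) (b # v) = image_mset (Cons a) (SH u (b # v)) + image_mset (Cons b) (SH (a # u) v)"

lemma SH_Nil2[simp]: "SH u [] = {#u#}"
  by (cases u) auto

lemma mset_shuf_rev: "mset (shuf_rev u v) = SH u v"
  by (induction u v rule: shuf_rev.induct) (auto simp: mset_map)

lemma SH_comm: "SH u v = SH v u"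
  by (induction u v rule: SH.induct) (auto simp: add.commute)

lemma mset_SH: "z \<in># SH u v \<Longrightarrow> mset z = mset u + mset v"
  by (induction u v arbitrary: z rule: SH.induct) auto

lemma length_SH: "z \<in># SH u v \<Longrightarrow> length z = length u + length v"
  using mset_SH by (metis size_mset size_union)

lemma size_SH: "size (SH u v) = (length u + length v) choose length u"
  by (induction u v rule: SH.induct) auto

lemma count_image_Cons: "count (image_mset (Cons a) M) (b # w) = (if a = b then count M w else 0)"
  by (induction M) auto

lemma count_image_Cons_Nil: "count (image_mset (Cons a) M) [] = 0"
  by (induction M) auto

lemma count_image_snoc: "count (image_mset (\<lambda>z. z @ [a]) M) (w @ [b]) = (if a = b then count M w else 0)"
  by (induction M) auto

lemma count_image_snoc_Nil: "count (image_mset (\<lambda>z. z @ [a]) M) [] = 0"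
  by (induction M) auto

lemma count_SH_Cons:
  "count (SH p q) (a # w) =
     (if p \<noteq> [] \<and> hd p = a then count (SH (tl p) q) w else 0) +
     (if q \<noteq> [] \<and> hd q = a then count (SH p (tl q)) w else 0)"
proof (cases p)
  case Nil
  then show ?thesis by (cases q) auto
next
  case (Cons c p')
  then show ?thesis
    by (cases q) (auto simp: count_image_Cons)
qed

lemma count_SH_Nil: "count (SH p q) [] = (if p = [] \<and> q = [] then 1 else 0)"
proof (cases p)
  case Nil
  then show ?thesis by (cases q) auto
next
  case (Cons c p')
  then show ?thesis
    by (cases q) (auto simp: count_image_Cons_Nil)
qed

lemma SH_single_snoc: "SH [a] (v @ [b]) = {#v @ [b, a]#} + image_mset (\<lambda>z. z @ [b]) (SH [a] v)"
proof (induction v)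
  case Nil
  then show ?case by simp
next
  case (Cons d v)
  have "SH [a] ((d # v) @ [b]) = {#a # d # v @ [b]#} + image_mset (Cons d) (SH [a] (v @ [b]))"
    by simp
  also have "\<dots> = {#a # d # v @ [b]#} + image_mset (Cons d) ({#v @ [b, a]#} + image_mset (\<lambda>z. z @ [b]) (SH [a] v))"
    using Cons by simp
  also have "\<dots> = {#(d # v) @ [b, a]#} + image_mset (\<lambda>z. z @ [b]) (SH [a] (d # v))"
    by (simp add: multiset.map_comp comp_def add_ac)
  finally show ?case .
qed

lemma SH_snoc:
  "SH (u @ [a]) (v @ [b]) = image_mset (\<lambda>z. z @ [a]) (SH u (v @ [b])) + image_mset (\<lambda>z. z @ [b]) (SH (u @ [a]) v)"
proof (induction "length u + length v" arbitrary: u v rule: less_induct)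
  case less
  show ?case
  proof (cases u)
    case Nil
    then show ?thesis using SH_single_snoc[of a v b] by simp
  next
    case (Cons c u')
    note uc = Cons
    show ?thesis
    proof (cases v)
      case Nil
      have "SH (u @ [a]) [b] = SH [b] (u @ [a])" by (rule SH_comm)
      also have "\<dots> = {#u @ [a, b]#} + image_mset (\<lambda>z. z @ [a]) (SH [b] u)"
        by (rule SH_single_snoc)
      finally show ?thesis using Nil by (simp add: SH_comm[of "[b]"] add_ac)
    next
      case (Cons d v')
      have IH1: "SH (u' @ [a]) (v @ [b]) = image_mset (\<lambda>z. z @ [a]) (SH u' (v @ [b])) + image_mset (\<lambda>z. z @ [b]) (SH (u' @ [a]) v)"
        using less uc by simp
      have IH2: "SH (u @ [a]) (v' @ [b]) = image_mset (\<lambda>z. z @ [a]) (SH u (v' @ [b])) + image_mset (\<lambda>z. z @ [b]) (SH (u @ [a]) v')"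
        using less Cons by simp
      have "SH (u @ [a]) (v @ [b]) = image_mset (Cons c) (SH (u' @ [a]) (v @ [b])) + image_mset (Cons d) (SH (u @ [a]) (v' @ [b]))"
        using uc Cons by simp
      also have "\<dots> = image_mset (Cons c) (image_mset (\<lambda>z. z @ [a]) (SH u' (v @ [b])) + image_mset (\<lambda>z. z @ [b]) (SH (u' @ [a]) v))
          + image_mset (Cons d) (image_mset (\<lambda>z. z @ [a]) (SH u (v' @ [b])) + image_mset (\<lambda>z. z @ [b]) (SH (u @ [a]) v'))"
        using IH1 IH2 by simp
      also have "\<dots> = image_mset (\<lambda>z. z @ [a]) (image_mset (Cons c) (SH u' (v @ [b])) + image_mset (Cons d) (SH u (v' @ [b])))
          + image_mset (\<lambda>z. z @ [b]) (image_mset (Cons c) (SH (u' @ [a]) v) + image_mset (Cons d) (SH (u @ [a]) v'))"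
        by (simp add: multiset.map_comp comp_def add_ac)
      also have "\<dots> = image_mset (\<lambda>z. z @ [a]) (SH u (v @ [b])) + image_mset (\<lambda>z. z @ [b]) (SH (u @ [a]) v)"
        using uc Cons by simp
      finally show ?thesis .
    qed
  qed
qed

lemma SH_rev: "image_mset rev (SH (rev u) (rev v)) = SH u v"
proof (induction "length u + length v" arbitrary: u v rule: less_induct)
  case less
  show ?case
  proof (cases u rule: rev_cases)
    case Nil
    then show ?thesis by simp
  next
    case (snoc u' a)
    note us = snoc
    show ?thesis
    proof (cases v rule: rev_cases)
      case Nil
      then show ?thesis by simp
    next
      case (snoc v' b)
      have "image_mset rev (SH (rev u) (rev v)) =
        image_mset (\<lambda>z. rev z @ [a]) (SH (rev u') (rev v)) + image_mset (\<lambda>z. rev z @ [b]) (SH (rev u) (rev v'))"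
        using us snoc by (simp add: multiset.map_comp comp_def)
      also have "\<dots> = image_mset (\<lambda>z. z @ [a]) (image_mset rev (SH (rev u') (rev v))) + image_mset (\<lambda>z. z @ [b]) (image_mset rev (SH (rev u) (rev v')))"
        by (simp add: multiset.map_comp comp_def)
      also have "\<dots> = image_mset (\<lambda>z. z @ [a]) (SH u' v) + image_mset (\<lambda>z. z @ [b]) (SH u v')"
      proof -
        have "image_mset rev (SH (rev u') (rev v)) = SH u' v" using less.hyps[of u' v] us by simp
        moreover have "image_mset rev (SH (rev u) (rev v')) = SH u v'" using less.hyps[of u v'] snoc by simp
        ultimately show ?thesis by simp
      qed
      also have "\<dots> = SH u v" using SH_snoc[of u' a v' b] us snoc by simp
      finally show ?thesis .
    qed
  qed
qed

lemma shuffle_w_SH: "shuffle_w u v z = of_nat (count (SH u v) z)"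
  unfolding shuffle_w_def
  by (simp flip: count_mset add: mset_map mset_shuf_rev SH_rev)

lemma count_SH_snoc:
  "count (SH p q) (w @ [a]) =
     (if p \<noteq> [] \<and> last p = a then count (SH (butlast p) q) w else 0) +
     (if q \<noteq> [] \<and> last q = a then count (SH p (butlast q)) w else 0)"
proof (cases p rule: rev_cases)
  case Nil
  then show ?thesis by (cases q rule: rev_cases) auto
next
  case (snoc p' c)
  then show ?thesis
    by (cases q rule: rev_cases) (auto simp: SH_snoc count_image_snoc)
qed


definition shv :: "('a list \<Rightarrow> 'k::comm_ring_1) \<Rightarrow> 'a list \<Rightarrow> 'a list \<Rightarrow> 'k" where
  "shv A u v = sum_mset (image_mset A (SH u v))"

definition conv :: "('a list \<Rightarrow> 'k::comm_ring_1) \<Rightarrow> ('a list \<Rightarrow> 'k) \<Rightarrow> 'a list \<Rightarrow> 'k" where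
  "conv A B w = (\<Sum>i\<le>length w. A (take i w) * B (drop i w))"

definition is_char :: "('a list \<Rightarrow> 'k::comm_ring_1) \<Rightarrow> bool" where
  "is_char A \<longleftrightarrow> A [] = 1 \<and> (\<forall>u v. shv A u v = A u * A v)"

lemma shv_Nil1[simp]: "shv A [] v = A v" by (simp add: shv_def)
lemma shv_Nil2[simp]: "shv A u [] = A u" by (simp add: shv_def)
lemma shv_Cons_Cons: "shv A (a # u) (b # v) = shv (\<lambda>z. A (a # z)) u (b # v) + shv (\<lambda>z. A (b # z)) (a # u) v"
  by (simp add: shv_def multiset.map_comp comp_def)

lemma shv_lin: "shv (\<lambda>z. c * F z + G z) u v = c * shv F u v + shv G u v"
  by (simp add: shv_def sum_mset.distrib sum_mset_distrib_left)

lemma conv_Cons: "conv A B (a # z) = A [] * B (a # z) + conv (\<lambda>p. A (a # p)) B z"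
  unfolding conv_def by (simp add: sum.atMost_Suc_shift del: sum.atMost_Suc)

lemma conv_Nil[simp]: "conv A B [] = A [] * B []"
  unfolding conv_def by simp

lemma DC:
  "shv (conv A B) u v = (\<Sum>i\<le>length u. \<Sum>j\<le>length v.
      shv A (take i u) (take j v) * shv B (drop i u) (drop j v))"
proof (induction u v arbitrary: A B rule: SH.induct)
  case (1 v)
  then show ?case by (simp add: conv_def)
next
  case (2 a u)
  then show ?case by (simp add: conv_def)
next
  case (3 a u b v)
  let ?Aa = "\<lambda>p. A (a # p)" and ?Ab = "\<lambda>p. A (b # p)"
  have L: "shv (conv A B) (a # u) (b # v) =
     A [] * shv B (a # u) (b # v) + shv (conv ?Aa B) u (b # v) + shv (conv ?Ab B) (a # u) v"
  proof -
    have "shv (conv A B) (a # u) (b # v) = shv (\<lambda>z. A [] * B (a # z) + conv ?Aa B z) u (b # v)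
        + shv (\<lambda>z. A [] * B (b # z) + conv ?Ab B z) (a # u) v"
      by (simp add: shv_Cons_Cons conv_Cons)
    also have "\<dots> = A [] * (shv (\<lambda>z. B (a # z)) u (b # v) + shv (\<lambda>z. B (b # z)) (a # u) v)
        + shv (conv ?Aa B) u (b # v) + shv (conv ?Ab B) (a # u) v"
      by (simp only: shv_lin) (simp add: algebra_simps)
    finally show ?thesis by (simp add: shv_Cons_Cons)
  qed
  define T where "T i j = shv A (take i (a # u)) (take j (b # v)) * shv B (drop i (a # u)) (drop j (b # v))" for i j
  define Ia where "Ia i j = shv ?Aa (take i u) (take j (b # v)) * shv B (drop i u) (drop j (b # v))" for i j
  define Ib where "Ib i j = shv ?Ab (take i (a # u)) (take j v) * shv B (drop i (a # u)) (drop j v)" for i j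
  have IHa: "shv (conv ?Aa B) u (b # v) = (\<Sum>i\<le>length u. \<Sum>j\<le>Suc (length v). Ia i j)"
    using "3.IH"(1)[of ?Aa B] by (simp add: Ia_def)
  have IHb: "shv (conv ?Ab B) (a # u) v = (\<Sum>i\<le>Suc (length u). \<Sum>j\<le>length v. Ib i j)"
    using "3.IH"(2)[of ?Ab B] by (simp add: Ib_def)
  have T00: "T 0 0 = A [] * shv B (a # u) (b # v)" by (simp add: T_def)
  have T0j: "T 0 (Suc j) = Ib 0 j" for j by (simp add: T_def Ib_def)
  have Ti0: "T (Suc i) 0 = Ia i 0" for i by (simp add: T_def Ia_def)
  have Tij: "T (Suc i) (Suc j) = Ia i (Suc j) + Ib (Suc i) j" for i j
    by (simp add: T_def Ia_def Ib_def shv_Cons_Cons algebra_simps)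
  have "(\<Sum>i\<le>Suc (length u). \<Sum>j\<le>Suc (length v). T i j)
     = (\<Sum>j\<le>Suc (length v). T 0 j) + (\<Sum>i\<le>length u. \<Sum>j\<le>Suc (length v). T (Suc i) j)"
    by (simp add: sum.atMost_Suc_shift del: sum.atMost_Suc)
  also have "(\<Sum>j\<le>Suc (length v). T 0 j) = T 0 0 + (\<Sum>j\<le>length v. Ib 0 j)"
    by (simp add: sum.atMost_Suc_shift T0j del: sum.atMost_Suc)
  also have "(\<Sum>i\<le>length u. \<Sum>j\<le>Suc (length v). T (Suc i) j)
      = (\<Sum>i\<le>length u. Ia i 0 + (\<Sum>j\<le>length v. Ia i (Suc j)) + (\<Sum>j\<le>length v. Ib (Suc i) j))"
    by (simp add: sum.atMost_Suc_shift Ti0 Tij sum.distrib add.assoc del: sum.atMost_Suc)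
  also have "\<dots> = (\<Sum>i\<le>length u. \<Sum>j\<le>Suc (length v). Ia i j) + (\<Sum>i\<le>length u. \<Sum>j\<le>length v. Ib (Suc i) j)"
    by (simp add: sum.atMost_Suc_shift sum.distrib del: sum.atMost_Suc)
  finally have R: "(\<Sum>i\<le>Suc (length u). \<Sum>j\<le>Suc (length v). T i j) =
      T 0 0 + shv (conv ?Aa B) u (b # v) + shv (conv ?Ab B) (a # u) v"
    unfolding IHa IHb by (simp add: sum.atMost_Suc_shift[of _ "length u"] algebra_simps del: sum.atMost_Suc)
  show ?case using L R T00 by (simp add: T_def)
qed

lemma conv_char: assumes "is_char A" "is_char B" shows "is_char (conv A B)"
proof -
  have "shv (conv A B) u v = conv A B u * conv A B v" for u v
  proof -
    have "shv (conv A B) u v = (\<Sum>i\<le>length u. \<Sum>j\<le>length v.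
      (A (take i u) * B (drop i u)) * (A (take j v) * B (drop j v)))"
      using assms by (simp add: DC is_char_def algebra_simps)
    also have "\<dots> = conv A B u * conv A B v"
      by (simp add: conv_def sum_product)
    finally show ?thesis .
  qed
  then show ?thesis using assms by (simp add: is_char_def)
qed


definition Eser :: "(nat \<Rightarrow> nat \<Rightarrow> 'k::field_char_0) \<Rightarrow> nat \<Rightarrow> word \<Rightarrow> 'k" where
  "Eser x i w = evalm (sum_list w) (x i) / fact (length w)"

lemma evalm_add: "evalm (A + B) y = evalm A y * evalm B y"
  by (simp add: evalm_def)

lemma evalm_empty[simp]: "evalm {#} y = 1"
  by (simp add: evalm_def)

lemma sum_mset_image_const:
  "(\<And>z. z \<in># M \<Longrightarrow> f z = c) \<Longrightarrow> sum_mset (image_mset f M) = of_nat (size M) * c"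
  by (induction M) (auto simp: algebra_simps)

lemma sum_list_mset: "sum_list (w :: 'a::comm_monoid_add list) = sum_mset (mset w)"
  by (induction w) auto

lemma Eser_char: "is_char (Eser x i)"
  unfolding is_char_def
proof (intro conjI allI)
  show "Eser x i [] = 1" by (simp add: Eser_def)
  fix u v :: word
  have "shv (Eser x i) u v = of_nat (size (SH u v)) *
     (evalm (sum_list u + sum_list v) (x i) / fact (length u + length v))"
    unfolding shv_def
  proof (rule sum_mset_image_const)
    fix z assume "z \<in># SH u v"
    then have "mset z = mset u + mset v" "length z = length u + length v"
      using mset_SH length_SH by blast+
    then show "Eser x i z = evalm (sum_list u + sum_list v) (x i) / fact (length u + length v)"
      by (simp add: Eser_def sum_list_mset)
  qed
  also have "\<dots> = Eser x i u * Eser x i v"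
    by (simp add: size_SH binomial_fact Eser_def evalm_add field_simps)
  finally show "shv (Eser x i) u v = Eser x i u * Eser x i v" .
qed

fun Sser :: "(nat \<Rightarrow> nat \<Rightarrow> 'k::field_char_0) \<Rightarrow> nat \<Rightarrow> word \<Rightarrow> 'k" where
  "Sser x 0 = (\<lambda>w. if w = [] then 1 else 0)"
| "Sser x (Suc N) = conv (Sser x N) (Eser x N)"

lemma eps_char: "is_char (\<lambda>w::'a list. if w = [] then (1::'k::comm_ring_1) else 0)"
proof -
  have "shv (\<lambda>w::'a list. if w = [] then (1::'k) else 0) u v = (if u = [] then 1 else 0) * (if v = [] then 1 else 0)" for u v
    unfolding shv_def
  proof (cases "u = [] \<and> v = []")
    case True then show "sum_mset (image_mset (\<lambda>w::'a list. if w = [] then (1::'k) else 0) (SH u v)) = (if u = [] then 1 else 0) * (if v = [] then 1 else 0)" by simp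
  next
    case False
    then have "sum_mset (image_mset (\<lambda>w::'a list. if w = [] then (1::'k) else 0) (SH u v)) = of_nat (size (SH u v)) * 0"
      by (intro sum_mset_image_const) (auto dest: length_SH)
    then show "sum_mset (image_mset (\<lambda>w::'a list. if w = [] then (1::'k) else 0) (SH u v)) = (if u = [] then 1 else 0) * (if v = [] then 1 else 0)"
      using False by auto
  qed
  then show ?thesis by (simp add: is_char_def)
qed

lemma Sser_char: "is_char (Sser x N)"
  by (induction N) (auto intro: conv_char eps_char Eser_char)

lemma sorted_insert_max: "finite S \<Longrightarrow> S \<subseteq> {0..<N} \<Longrightarrow> sorted_list_of_set (insert N S) = sorted_list_of_set S @ [N]"
proof -
  assume f: "finite S" and s: "S \<subseteq> {0..<N}"
  have "sorted_wrt (<) (sorted_list_of_set S @ [N])"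
    using s f by (auto simp: sorted_wrt_append strict_sorted_list_of_set)
  moreover have "set (sorted_list_of_set S @ [N]) = insert N S" using f by auto
  moreover have "length (sorted_list_of_set S @ [N]) = card (insert N S)"
    using f s by (auto simp: card_insert_if)
  ultimately show ?thesis
    using sorted_list_of_set_unique[of "insert N S" "sorted_list_of_set S @ [N]"] f by blast
qed

lemma DS_Nil[simp]: "DS N x [] = 1"
proof -
  have "{S. S \<subseteq> {0..<N} \<and> card S = 0} = {{}}"
    by (auto dest: finite_subset)
  then show ?thesis by (simp add: DS_def)
qed

lemma DS_Suc:
  "DS (Suc N) x (w @ [a]) = DS N x (w @ [a]) + DS N x w * evalm a (x N)"
proof -
  let ?k = "length w"
  let ?f = "\<lambda>w S. \<Prod>j<length w. evalm (w ! j) (x (sorted_list_of_set S ! j))"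
  define A where "A = {S. S \<subseteq> {0..<N} \<and> card S = Suc ?k}"
  define B where "B = {S. S \<subseteq> {0..<N} \<and> card S = ?k}"
  have fin: "finite A" "finite B"
    unfolding A_def B_def by (rule finite_subset[of _ "Pow {0..<N}"]; auto)+
  have split: "{S. S \<subseteq> {0..<Suc N} \<and> card S = Suc ?k} = A \<union> insert N ` B"
  proof (intro equalityI subsetI)
    fix S assume S: "S \<in> {S. S \<subseteq> {0..<Suc N} \<and> card S = Suc ?k}"
    show "S \<in> A \<union> insert N ` B"
    proof (cases "N \<in> S")
      case True
      have "S - {N} \<in> B" using S True unfolding B_def
        by (auto simp: finite_subset[of S "{0..<Suc N}"] less_Suc_eq)
      then show ?thesis using True by (auto intro!: image_eqI[of _ _ "S - {N}"])
    next
      case False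
      then show ?thesis using S unfolding A_def by (auto simp: less_Suc_eq)
    qed
  next
    fix S assume "S \<in> A \<union> insert N ` B"
    then consider "S \<in> A" | S' where "S' \<in> B" "S = insert N S'" by blast
    then show "S \<in> {S. S \<subseteq> {0..<Suc N} \<and> card S = Suc ?k}"
    proof cases
      case 1 then show ?thesis unfolding A_def by auto
    next
      case (2 S')
      then have s1: "S' \<subseteq> {0..<N}" "card S' = ?k" unfolding B_def by auto
      then have "finite S'" using finite_subset by blast
      moreover have "N \<notin> S'" using s1 by auto
      ultimately have "card S = Suc ?k" using 2 s1 by simp
      moreover have "S \<subseteq> {0..<Suc N}" using 2 s1 by auto
      ultimately show ?thesis by simp
    qed
  qed
  have disj: "A \<inter> insert N ` B = {}"
  proof -
    have "N \<notin> S" if "S \<in> A" for S using that unfolding A_def by auto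
    then show ?thesis by auto
  qed
  have inj: "inj_on (insert N) B" unfolding B_def
  proof (rule inj_onI)
    fix S1 S2 assume "S1 \<in> {S. S \<subseteq> {0..<N} \<and> card S = length w}" "S2 \<in> {S. S \<subseteq> {0..<N} \<and> card S = length w}"
      "insert N S1 = insert N S2"
    moreover have "N \<notin> S1" "N \<notin> S2" using calculation by auto
    ultimately show "S1 = S2" by (metis insert_ident)
  qed
  have "DS (Suc N) x (w @ [a]) = sum (?f (w @ [a])) A + sum (?f (w @ [a])) (insert N ` B)"
    unfolding DS_def using split disj fin by (simp add: sum.union_disjoint)
  also have "sum (?f (w @ [a])) A = DS N x (w @ [a])"
    unfolding DS_def A_def by simp
  also have "sum (?f (w @ [a])) (insert N ` B) = sum (\<lambda>S. ?f (w @ [a]) (insert N S)) B"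
    using inj by (simp add: sum.reindex)
  also have "\<dots> = sum (\<lambda>S. ?f w S * evalm a (x N)) B"
  proof (rule sum.cong[OF refl])
    fix S assume S: "S \<in> B"
    then have fS: "finite S" "S \<subseteq> {0..<N}" "card S = ?k" unfolding B_def by (auto dest: finite_subset)
    have sl: "sorted_list_of_set (insert N S) = sorted_list_of_set S @ [N]"
      using sorted_insert_max fS by blast
    have len: "length (sorted_list_of_set S) = ?k" using fS by simp
    show "?f (w @ [a]) (insert N S) = ?f w S * evalm a (x N)"
      unfolding sl using len by (simp add: nth_append)
  qed
  also have "\<dots> = DS N x w * evalm a (x N)"
    unfolding DS_def B_def by (simp add: sum_distrib_right)
  finally show ?thesis .
qed


lemma pair_superset:
  assumes "finite F" "{u. p u \<noteq> 0} \<subseteq> F"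
  shows "pair S p = (\<Sum>u\<in>F. S u * p u)"
  unfolding pair_def using assms by (intro sum.mono_neutral_left) auto

lemma comps_finite: "finite (comps n)"
proof -
  have "comps n \<subseteq> {xs. set xs \<subseteq> {0..n} \<and> length xs \<le> n}"
  proof
    fix \<alpha> assume a: "\<alpha> \<in> comps n"
    then have s: "sum_list \<alpha> = n" "\<forall>a\<in>set \<alpha>. 0 < a" by (auto simp: comps_def)
    have "set \<alpha> \<subseteq> {0..n}"
      using s by (auto simp: member_le_sum_list)
    moreover have "length \<alpha> \<le> sum_list \<alpha>" using s(2)
      by (induction \<alpha>) auto
    ultimately show "\<alpha> \<in> {xs. set xs \<subseteq> {0..n} \<and> length xs \<le> n}" using s by auto
  qed
  moreover have "finite {xs. set xs \<subseteq> {0..n} \<and> length xs \<le> n}"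
    by (rule finite_lists_length_le) simp
  ultimately show ?thesis by (rule finite_subset)
qed

lemma comps_0: "comps 0 = {[]}"
  by (auto simp: comps_def) (metis neq0_conv list.set_intros(1) list.exhaust sum_list_eq_0_iff)

lemma comps_pos: "0 < n \<Longrightarrow> comps n = (\<lambda>(i, \<beta>). \<beta> @ [n - i]) ` (SIGMA i:{..<n}. comps i)"
proof (intro equalityI subsetI)
  fix \<alpha> assume n: "0 < n" and a: "\<alpha> \<in> comps n"
  then have "\<alpha> \<noteq> []" by (auto simp: comps_def)
  then obtain \<beta> m where am: "\<alpha> = \<beta> @ [m]" by (cases \<alpha> rule: rev_cases) auto
  then have "sum_list \<beta> + m = n" "0 < m" "\<forall>a\<in>set \<beta>. 0 < a" using a by (auto simp: comps_def)
  then show "\<alpha> \<in> (\<lambda>(i, \<beta>). \<beta> @ [n - i]) ` (SIGMA i:{..<n}. comps i)"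
    using am by (auto simp: comps_def intro!: image_eqI[of _ _ "(sum_list \<beta>, \<beta>)"])
next
  fix \<alpha> assume n: "0 < n" and "\<alpha> \<in> (\<lambda>(i, \<beta>). \<beta> @ [n - i]) ` (SIGMA i:{..<n}. comps i)"
  then show "\<alpha> \<in> comps n" by (auto simp: comps_def)
qed

lemma comps_pos_inj: "inj_on (\<lambda>(i, \<beta>). \<beta> @ [n - i]) (SIGMA i:{..<n}. comps i)"
  by (rule inj_onI) auto

lemma sum_comps_pos:
  assumes "0 < n"
  shows "(\<Sum>\<alpha>\<in>comps n. f \<alpha>) = (\<Sum>i<n. \<Sum>\<beta>\<in>comps i. f (\<beta> @ [n - i]))"
proof -
  have "(\<Sum>\<alpha>\<in>comps n. f \<alpha>) = (\<Sum>p\<in>(SIGMA i:{..<n}. comps i). f ((\<lambda>(i, \<beta>). \<beta> @ [n - i]) p))"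
    unfolding comps_pos[OF assms] by (rule sum.reindex[OF comps_pos_inj, unfolded comp_def])
  also have "\<dots> = (\<Sum>i<n. \<Sum>\<beta>\<in>comps i. f (\<beta> @ [n - i]))"
    using sum.Sigma[of "{..<n}" comps "\<lambda>i \<beta>. f (\<beta> @ [n - i])"] comps_finite
    by (simp add: split_def)
  finally show ?thesis .
qed

lemma contract_append: "contract (\<alpha> @ \<beta>) w = contract \<alpha> w @ contract \<beta> (drop (sum_list \<alpha>) w)"
  by (induction \<alpha> arbitrary: w) (auto simp: add.commute)

lemma contract_take: "contract \<alpha> w = contract \<alpha> (take (sum_list \<alpha>) w)"
proof (induction \<alpha> arbitrary: w)
  case (Cons a \<alpha>)
  have "drop a (take (a + sum_list \<alpha>) w) = take (sum_list \<alpha>) (drop a w)" by (simp add: drop_take)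
  then show ?case using Cons.IH[of "drop a w"] by simp
qed simp

lemma length_contract[simp]: "length (contract \<alpha> w) = length \<alpha>"
  by (induction \<alpha> arbitrary: w) auto

lemma hoffman_adj_eq:
  fixes S :: "'k::field_char_0 ser"
  shows "hoffman_adj S w = (\<Sum>\<alpha>\<in>comps (length w). S (contract \<alpha> w) / of_nat (prod_list (map fact \<alpha>)))"
proof -
  let ?C = "comps (length w)"
  let ?F = "(\<lambda>\<alpha>. contract \<alpha> w) ` ?C"
  let ?c = "\<lambda>\<alpha>. 1 / of_nat (prod_list (map fact \<alpha>)) :: 'k"
  have fF: "finite ?F" using comps_finite by simp
  have sub: "{u. hoffman w u \<noteq> (0::'k)} \<subseteq> ?F"
  proof
    fix u assume "u \<in> {u. hoffman w u \<noteq> (0::'k)}"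
    then have "(\<Sum>\<alpha>\<in>?C. if contract \<alpha> w = u then ?c \<alpha> else 0) \<noteq> 0" by (simp add: hoffman_def)
    then obtain \<alpha> where "\<alpha> \<in> ?C" "(if contract \<alpha> w = u then ?c \<alpha> else 0) \<noteq> 0"
      using sum.not_neutral_contains_not_neutral by blast
    then have "\<alpha> \<in> ?C" "contract \<alpha> w = u" by (auto split: if_splits)
    then show "u \<in> ?F" by auto
  qed
  have "hoffman_adj S w = (\<Sum>u\<in>?F. S u * hoffman w u)"
    unfolding hoffman_adj_def by (rule pair_superset[OF fF sub])
  also have "\<dots> = (\<Sum>u\<in>?F. \<Sum>\<alpha>\<in>?C. S u * (if contract \<alpha> w = u then ?c \<alpha> else 0))"
    by (simp only: hoffman_def sum_distrib_left)
  also have "\<dots> = (\<Sum>\<alpha>\<in>?C. \<Sum>u\<in>?F. S u * (if contract \<alpha> w = u then ?c \<alpha> else 0))"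
    by (rule sum.swap)
  also have "\<dots> = (\<Sum>\<alpha>\<in>?C. S (contract \<alpha> w) * ?c \<alpha>)"
  proof (rule sum.cong[OF refl])
    fix \<alpha> assume a: "\<alpha> \<in> ?C"
    have "(\<Sum>u\<in>?F. S u * (if contract \<alpha> w = u then ?c \<alpha> else 0)) =
          (\<Sum>u\<in>?F. if u = contract \<alpha> w then S (contract \<alpha> w) * ?c \<alpha> else 0)"
      by (rule sum.cong[OF refl]) auto
    also have "\<dots> = S (contract \<alpha> w) * ?c \<alpha>"
      using a fF by (subst sum.delta) auto
    finally show "(\<Sum>u\<in>?F. S u * (if contract \<alpha> w = u then ?c \<alpha> else 0)) = S (contract \<alpha> w) * ?c \<alpha>" .
  qed
  finally show ?thesis by simp
qed

lemma DS_0: "DS 0 x w = (if w = [] then 1 else 0)"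
proof (cases "w = []")
  case False
  then have "{S. S \<subseteq> {0..<0::nat} \<and> card S = length w} = {}" by auto
  then show ?thesis using False unfolding DS_def by (subst \<open>{S. S \<subseteq> {0..<0::nat} \<and> card S = length w} = {}\<close>) simp
qed simp

lemma Sser_Nil[simp]: "Sser x N [] = 1"
  using Sser_char[of x N] by (simp add: is_char_def)

lemma prod_fact_snoc: "prod_list (map fact (\<beta> @ [m])) = prod_list (map fact \<beta>) * (fact m :: nat)"
  by simp

lemma hoffman_DS: "hoffman_adj (DS N x) w = Sser x N w"
proof (induction N arbitrary: w)
  case 0
  show ?case
  proof (cases "w = []")
    case True
    then show ?thesis by (simp add: hoffman_adj_eq comps_0)
  next
    case False
    have "contract \<alpha> w \<noteq> []" if "\<alpha> \<in> comps (length w)" for \<alpha>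
      using that False by (auto simp: comps_def dest: arg_cong[where f=length])
    then show ?thesis using False by (simp add: hoffman_adj_eq DS_0)
  qed
next
  case (Suc N)
  show ?case
  proof (cases "w = []")
    case True
    then show ?thesis by (simp add: hoffman_adj_eq comps_0 Eser_def)
  next
    case False
    define n where "n = length w"
    have n: "0 < n" using False by (simp add: n_def)
    let ?d = "\<lambda>\<alpha>. of_nat (prod_list (map fact \<alpha>)) :: 'a"
    have "hoffman_adj (DS (Suc N) x) w = (\<Sum>\<alpha>\<in>comps n. DS (Suc N) x (contract \<alpha> w) / ?d \<alpha>)"
      by (simp add: hoffman_adj_eq n_def)
    also have "\<dots> = (\<Sum>i<n. \<Sum>\<beta>\<in>comps i. DS (Suc N) x (contract (\<beta> @ [n - i]) w) / ?d (\<beta> @ [n - i]))"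
      by (rule sum_comps_pos[OF n])
    also have "\<dots> = (\<Sum>i<n. \<Sum>\<beta>\<in>comps i. DS N x (contract (\<beta> @ [n - i]) w) / ?d (\<beta> @ [n - i]))
        + (\<Sum>i<n. (\<Sum>\<beta>\<in>comps i. DS N x (contract \<beta> (take i w)) / ?d \<beta>) * Eser x N (drop i w))"
    proof -
      have "DS (Suc N) x (contract (\<beta> @ [n - i]) w) / ?d (\<beta> @ [n - i]) =
          DS N x (contract (\<beta> @ [n - i]) w) / ?d (\<beta> @ [n - i]) +
          DS N x (contract \<beta> (take i w)) / ?d \<beta> * Eser x N (drop i w)"
        if "i < n" "\<beta> \<in> comps i" for i \<beta>
      proof -
        have sb: "sum_list \<beta> = i" using that by (simp add: comps_def)
        have c: "contract (\<beta> @ [n - i]) w = contract \<beta> (take i w) @ [sum_list (drop i w)]"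
        proof -
          have "contract \<beta> w = contract \<beta> (take i w)" using contract_take[of \<beta> w] sb by simp
          then show ?thesis using sb by (simp add: contract_append n_def)
        qed
        have ld: "length (drop i w) = n - i" by (simp add: n_def)
        show ?thesis unfolding c DS_Suc
          by (simp add: Eser_def ld add_divide_distrib n_def)
      qed
      then show ?thesis by (simp add: sum.distrib sum_divide_distrib sum_distrib_right)
    qed
    also have "(\<Sum>i<n. \<Sum>\<beta>\<in>comps i. DS N x (contract (\<beta> @ [n - i]) w) / ?d (\<beta> @ [n - i])) = Sser x N w"
    proof -
      have "Sser x N w = (\<Sum>\<alpha>\<in>comps n. DS N x (contract \<alpha> w) / ?d \<alpha>)"
        using Suc.IH[of w] by (simp add: hoffman_adj_eq n_def)
      also have "\<dots> = (\<Sum>i<n. \<Sum>\<beta>\<in>comps i. DS N x (contract (\<beta> @ [n - i]) w) / ?d (\<beta> @ [n - i]))"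
        by (rule sum_comps_pos[OF n])
      finally show ?thesis by simp
    qed
    also have "(\<Sum>i<n. (\<Sum>\<beta>\<in>comps i. DS N x (contract \<beta> (take i w)) / ?d \<beta>) * Eser x N (drop i w))
        = (\<Sum>i<n. Sser x N (take i w) * Eser x N (drop i w))"
    proof (intro sum.cong refl)
      fix i assume "i \<in> {..<n}"
      then have "length (take i w) = i" by (simp add: n_def)
      then show "(\<Sum>\<beta>\<in>comps i. DS N x (contract \<beta> (take i w)) / ?d \<beta>) * Eser x N (drop i w)
         = Sser x N (take i w) * Eser x N (drop i w)"
        using Suc.IH[of "take i w"] by (simp add: hoffman_adj_eq)
    qed
    also have "Sser x N w + (\<Sum>i<n. Sser x N (take i w) * Eser x N (drop i w)) = Sser x (Suc N) w"
      by (simp add: conv_def n_def lessThan_Suc_atMost[symmetric] Eser_def)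
    finally show ?thesis .
  qed
qed


lemma sum_mset_image_count:
  assumes "finite F" "set_mset M \<subseteq> F"
  shows "sum_mset (image_mset f M) = (\<Sum>z\<in>F. of_nat (count M z) * f z)"
  using assms(2)
proof (induction M)
  case empty then show ?case by simp
next
  case (add x M)
  then have "x \<in> F" "set_mset M \<subseteq> F" by auto
  have "(\<Sum>z\<in>F. of_nat (count (add_mset x M) z) * f z) = (\<Sum>z\<in>F. of_nat (count M z) * f z + (if z = x then f z else 0))"
    by (rule sum.cong) (auto simp: algebra_simps)
  also have "\<dots> = (\<Sum>z\<in>F. of_nat (count M z) * f z) + f x"
    using \<open>x \<in> F\<close> assms(1) by (simp add: sum.distrib sum.delta)
  finally show ?case using add \<open>set_mset M \<subseteq> F\<close> by (simp add: add.commute)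
qed

definition eps :: "'a list \<Rightarrow> 'k::comm_ring_1" where
  "eps w = (if w = [] then 1 else 0)"

fun cpow :: "nat \<Rightarrow> ('a list \<Rightarrow> 'k::comm_ring_1) \<Rightarrow> 'a list \<Rightarrow> 'k" where
  "cpow 0 A = eps"
| "cpow (Suc n) A = conv A (cpow n A)"

lemma ht_append[simp]: "ht (u @ v) = ht u + ht v"
  by (simp add: ht_def)

lemma ht_take_le: "ht (take k w) \<le> ht w"
  using ht_append[of "take k w" "drop k w"] by simp

lemma ht_drop_le: "ht (drop k w) \<le> ht w"
  using ht_append[of "take k w" "drop k w"] by simp

lemma pow_h_cpow: "ht w \<le> h \<Longrightarrow> pow_h h n a w = cpow n a w"
proof (induction n arbitrary: w)
  case 0
  then show ?case by (simp add: trunc_def unit_ser_def wordp_def eps_def)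
next
  case (Suc n)
  have "pow_h h n a (drop k w) = cpow n a (drop k w)" for k
    using Suc.IH[of "drop k w"] ht_drop_le[of k w] Suc.prems by simp
  then show ?case using Suc.prems by (simp add: conc_h_def conv_def)
qed

lemma cpow_cong:
  assumes "\<And>z. ht z \<le> ht w \<Longrightarrow> A z = B z"
  shows "cpow n A w = cpow n B w"
  using assms
proof (induction n arbitrary: w)
  case (Suc n)
  have "cpow n A (drop k w) = cpow n B (drop k w)" for k
    using Suc.IH[of "drop k w"] Suc.prems ht_drop_le[of k w] by simp
  moreover have "A (take k w) = B (take k w)" for k
    using Suc.prems ht_take_le[of k w] by simp
  ultimately show ?case by (simp add: conv_def)
qed simp

lemma cpow_zero:
  assumes "A [] = 0" "length w < n"
  shows "cpow n A w = 0"
  using assms(2)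
proof (induction n arbitrary: w)
  case (Suc n)
  have "A (take k w) * cpow n A (drop k w) = 0" if "k \<le> length w" for k
  proof (cases k)
    case 0 then show ?thesis using assms(1) by simp
  next
    case (Suc k') then show ?thesis using Suc.IH[of "drop k w"] Suc.prems that by simp
  qed
  then show ?case by (simp add: conv_def)
qed simp

definition logc :: "'k::field_char_0 \<Rightarrow> nat \<Rightarrow> 'k" where
  "logc dummy n = ((-1) ^ (n - 1) / of_nat n)"

definition Lg :: "nat \<Rightarrow> (word \<Rightarrow> 'k::field_char_0) \<Rightarrow> word \<Rightarrow> 'k" where
  "Lg h S w = (\<Sum>n\<in>{1..h}. ((-1) ^ (n - 1) / of_nat n) * cpow n (\<lambda>z. S z - eps z) w)"

lemma logh_Lg: "ht w \<le> h \<Longrightarrow> logh h U w = Lg h U w"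
  unfolding logh_def Lg_def
  by (intro sum.cong refl) (simp add: pow_h_cpow unit_ser_def wordp_def eps_def[abs_def])

lemma size_sum_list: "size (sum_list (ms :: 'a multiset list)) = sum_list (map size ms)"
  by (induction ms) auto

lemma ht_contract: "ht (contract \<alpha> w) = ht (take (sum_list \<alpha>) w)"
proof (induction \<alpha> arbitrary: w)
  case (Cons a \<alpha>)
  have "take (a + sum_list \<alpha>) w = take a w @ take (sum_list \<alpha>) (drop a w)"
    by (simp add: take_add)
  then show ?case using Cons.IH[of "drop a w"] by (simp add: ht_def size_sum_list)
qed (simp add: ht_def)

lemma hoffman_trunc:
  assumes "ht w \<le> h"
  shows "hoffman_adj (trunc h S) w = hoffman_adj S w"
proof -
  have "trunc h S (contract \<alpha> w) = S (contract \<alpha> w)" if "\<alpha> \<in> comps (length w)" for \<alpha>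
  proof -
    have "sum_list \<alpha> = length w" using that by (simp add: comps_def)
    then have "ht (contract \<alpha> w) = ht w" by (simp add: ht_contract)
    then show ?thesis using assms by (simp add: trunc_def)
  qed
  then show ?thesis by (simp add: hoffman_adj_eq)
qed

lemma L_eq: "ht w \<le> h \<Longrightarrow> logh h (hoffman_adj (trunc h (DS N x))) w = Lg h (Sser x N) w"
proof -
  assume hw: "ht w \<le> h"
  have "logh h (hoffman_adj (trunc h (DS N x))) w = Lg h (hoffman_adj (trunc h (DS N x))) w"
    by (rule logh_Lg[OF hw])
  also have "\<dots> = Lg h (Sser x N) w"
    unfolding Lg_def
  proof (intro sum.cong refl arg_cong2[where f="(*)"] cpow_cong)
    fix z :: word assume "ht z \<le> ht w"
    then show "hoffman_adj (trunc h (DS N x)) z - eps z = Sser x N z - eps z"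
      using hw by (simp add: hoffman_trunc hoffman_DS)
  qed
  finally show ?thesis .
qed


definition supp :: "('a \<Rightarrow> 'k::zero) \<Rightarrow> 'a set" where
  "supp p = {u. p u \<noteq> 0}"

definition perms :: "'a list \<Rightarrow> 'a list set" where
  "perms w = {z. mset z = mset w}"

lemma perms_finite: "finite (perms w)"
proof -
  have "perms w \<subseteq> {z. set z \<subseteq> set w \<and> length z = length w}"
    unfolding perms_def by (auto dest: mset_eq_setD mset_eq_length)
  moreover have "finite {z. set z \<subseteq> set w \<and> length z = length w}"
    by (rule finite_lists_length_eq) simp
  ultimately show ?thesis by (rule finite_subset)
qed

lemma shuffle_p_wordp:
  "shuffle_p (wordp u) q z = (\<Sum>v\<in>supp q. q v * of_nat (count (SH u v) z))"
proof -
  have "{u'. wordp u u' \<noteq> (0::'a)} = {u}" by (auto simp: wordp_def)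
  then show ?thesis by (simp add: shuffle_p_def wordp_def shuffle_w_SH supp_def)
qed

lemma supp_shuffle_list: "supp (shuffle_list ps :: word \<Rightarrow> 'k::comm_ring_1) \<subseteq> perms (concat ps)"
proof (induction ps)
  case Nil
  then show ?case by (auto simp: supp_def unit_ser_def wordp_def perms_def)
next
  case (Cons u us)
  show ?case
  proof
    fix z assume "z \<in> supp (shuffle_list (u # us) :: word \<Rightarrow> 'k)"
    then have "(\<Sum>v\<in>supp (shuffle_list us :: word \<Rightarrow> 'k). shuffle_list us v * (of_nat (count (SH u v) z) :: 'k)) \<noteq> 0"
      by (simp add: supp_def shuffle_p_wordp)
    then obtain v where v0: "v \<in> supp (shuffle_list us :: word \<Rightarrow> 'k)" "shuffle_list us v * (of_nat (count (SH u v) z) :: 'k) \<noteq> 0"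
      using sum.not_neutral_contains_not_neutral by blast
    then have v: "v \<in> supp (shuffle_list us :: word \<Rightarrow> 'k)" "count (SH u v) z \<noteq> 0"
      by (metis mult_zero_right of_nat_0)+
    then have "mset z = mset u + mset v" by (intro mset_SH) (simp add: count_eq_zero_iff)
    moreover have "mset v = mset (concat us)" using v Cons.IH by (auto simp: perms_def)
    ultimately show "z \<in> perms (concat (u # us))" by (simp add: perms_def)
  qed
qed

lemma pair_shuffle_list:
  fixes S :: "word \<Rightarrow> 'k::comm_ring_1"
  assumes S: "is_char S"
  shows "pair S (shuffle_list ps) = prod_list (map S ps)"
proof (induction ps)
  case Nil
  have "pair S (unit_ser :: word \<Rightarrow> 'k) = (\<Sum>u\<in>{[]}. S u * unit_ser u)"
    by (rule pair_superset) (auto simp: unit_ser_def wordp_def)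
  then show ?case using S by (simp add: is_char_def unit_ser_def wordp_def)
next
  case (Cons u us)
  let ?q = "shuffle_list us :: word \<Rightarrow> 'k"
  let ?F = "perms (concat (u # us))"
  have sq: "supp ?q \<subseteq> perms (concat us)" by (rule supp_shuffle_list)
  have fq: "finite (supp ?q)" using sq perms_finite finite_subset by blast
  have "pair S (shuffle_list (u # us)) = (\<Sum>z\<in>?F. S z * shuffle_list (u # us) z)"
    using supp_shuffle_list[of "u # us"] perms_finite by (intro pair_superset) (auto simp: supp_def)
  also have "\<dots> = (\<Sum>z\<in>?F. \<Sum>v\<in>supp ?q. ?q v * (of_nat (count (SH u v) z) * S z))"
    by (simp add: shuffle_p_wordp sum_distrib_left algebra_simps)
  also have "\<dots> = (\<Sum>v\<in>supp ?q. ?q v * (\<Sum>z\<in>?F. of_nat (count (SH u v) z) * S z))"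
    by (subst sum.swap) (simp add: sum_distrib_left)
  also have "\<dots> = (\<Sum>v\<in>supp ?q. ?q v * shv S u v)"
  proof (intro sum.cong refl arg_cong2[where f="(*)"])
    fix v assume v: "v \<in> supp ?q"
    have "set_mset (SH u v) \<subseteq> ?F"
    proof
      fix z assume "z \<in># SH u v"
      then have "mset z = mset u + mset v" by (rule mset_SH)
      moreover have "mset v = mset (concat us)" using v sq by (auto simp: perms_def)
      ultimately show "z \<in> ?F" by (simp add: perms_def)
    qed
    then show "(\<Sum>z\<in>?F. of_nat (count (SH u v) z) * S z) = shv S u v"
      unfolding shv_def by (rule sum_mset_image_count[OF perms_finite, symmetric])
  qed
  also have "\<dots> = S u * pair S ?q"
    using S by (simp add: is_char_def pair_def supp_def sum_distrib_left algebra_simps)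
  finally show ?case using Cons by simp
qed

lemma decomps_0: "decomps 0 w = (if w = [] then {[]} else {})"
  by (auto simp: decomps_def)

lemma decomps_Suc:
  "decomps (Suc n) w = (\<lambda>(k, ps). take k w # ps) ` (SIGMA k:{1..length w}. decomps n (drop k w))"
proof (intro equalityI subsetI)
  fix qs assume "qs \<in> decomps (Suc n) w"
  then obtain p ps where qs: "qs = p # ps" "length ps = n" "p @ concat ps = w" "p \<noteq> []" "\<forall>p\<in>set ps. p \<noteq> []"
    by (cases qs) (auto simp: decomps_def)
  let ?k = "length p"
  have "take ?k w = p" "drop ?k w = concat ps" using qs(3) by auto
  moreover have "?k \<in> {1..length w}" using qs(3,4) by (auto simp: Suc_le_eq)
  ultimately show "qs \<in> (\<lambda>(k, ps). take k w # ps) ` (SIGMA k:{1..length w}. decomps n (drop k w))"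
    using qs by (auto simp: decomps_def intro!: image_eqI[of _ _ "(?k, ps)"])
next
  fix qs assume "qs \<in> (\<lambda>(k, ps). take k w # ps) ` (SIGMA k:{1..length w}. decomps n (drop k w))"
  then obtain k ps where "qs = take k w # ps" "k \<in> {1..length w}" "ps \<in> decomps n (drop k w)" by auto
  then show "qs \<in> decomps (Suc n) w"
    by (auto simp: decomps_def)
qed

lemma decomps_inj: "inj_on (\<lambda>(k, ps). take k w # ps) (SIGMA k:{1..length w}. decomps n (drop k w))"
proof (rule inj_onI)
  fix p p' assume "p \<in> (SIGMA k:{1..length w}. decomps n (drop k w))" "p' \<in> (SIGMA k:{1..length w}. decomps n (drop k w))"
    "(\<lambda>(k, ps). take k w # ps) p = (\<lambda>(k, ps). take k w # ps) p'"
  then show "p = p'"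
    by (cases p; cases p') (auto, metis atLeastAtMost_iff length_take min.absorb2)
qed

lemma decomps_finite: "finite (decomps n w)"
proof (induction n arbitrary: w)
  case 0 then show ?case by (simp add: decomps_0)
next
  case (Suc n) then show ?case by (simp add: decomps_Suc)
qed

lemma sum_decomps:
  assumes A: "A [] = 0"
  shows "(\<Sum>ps\<in>decomps n w. prod_list (map A ps)) = cpow n A w"
proof (induction n arbitrary: w)
  case 0
  then show ?case by (simp add: decomps_0 eps_def)
next
  case (Suc n)
  have "(\<Sum>ps\<in>decomps (Suc n) w. prod_list (map A ps))
      = (\<Sum>p\<in>(SIGMA k:{1..length w}. decomps n (drop k w)). prod_list (map A ((\<lambda>(k, ps). take k w # ps) p)))"
    unfolding decomps_Suc by (rule sum.reindex[OF decomps_inj, unfolded comp_def])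
  also have "\<dots> = (\<Sum>k\<in>{1..length w}. \<Sum>ps\<in>decomps n (drop k w). A (take k w) * prod_list (map A ps))"
    using sum.Sigma[of "{1..length w}" "\<lambda>k. decomps n (drop k w)" "\<lambda>k ps. A (take k w) * prod_list (map A ps)"]
      decomps_finite by (simp add: split_def)
  also have "\<dots> = (\<Sum>k\<in>{1..length w}. A (take k w) * cpow n A (drop k w))"
    using Suc.IH by (simp add: sum_distrib_left[symmetric])
  also have "\<dots> = (\<Sum>k\<le>length w. A (take k w) * cpow n A (drop k w))"
  proof -
    have "{..length w} = insert 0 {1..length w}" by auto
    then show ?thesis using A by simp
  qed
  finally show ?case by (simp add: conv_def)
qed

lemma supp_euler: "supp (euler_w w :: word \<Rightarrow> 'k::field_char_0) \<subseteq> perms w"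
proof
  fix z assume "z \<in> supp (euler_w w :: word \<Rightarrow> 'k)"
  then have "(\<Sum>n\<in>{1..length w}. ((-1) ^ (n - 1) / of_nat n) *
       (\<Sum>ps\<in>decomps n w. (shuffle_list ps z :: 'k))) \<noteq> 0" by (simp add: supp_def euler_w_def)
  then obtain n where "n \<in> {1..length w}" "((-1) ^ (n - 1) / of_nat n) * (\<Sum>ps\<in>decomps n w. (shuffle_list ps z :: 'k)) \<noteq> 0"
    using sum.not_neutral_contains_not_neutral by blast
  then have "(\<Sum>ps\<in>decomps n w. (shuffle_list ps z :: 'k)) \<noteq> 0" by auto
  then obtain ps where "ps \<in> decomps n w" "(shuffle_list ps z :: 'k) \<noteq> 0"
    using sum.not_neutral_contains_not_neutral by blast
  then show "z \<in> perms w" using supp_shuffle_list[of ps] by (auto simp: supp_def decomps_def)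
qed

lemma sum_swap_mult: "(\<Sum>z\<in>P. c * (\<Sum>ps\<in>D. f z ps)) = (c::'a::comm_ring_1) * (\<Sum>ps\<in>D. \<Sum>z\<in>P. f z ps)"
proof -
  have "(\<Sum>z\<in>P. c * (\<Sum>ps\<in>D. f z ps)) = c * (\<Sum>z\<in>P. \<Sum>ps\<in>D. f z ps)" by (simp add: sum_distrib_left)
  also have "\<dots> = c * (\<Sum>ps\<in>D. \<Sum>z\<in>P. f z ps)" by (subst sum.swap) (rule refl)
  finally show ?thesis .
qed

lemma pair_euler:
  fixes S :: "word \<Rightarrow> 'k::field_char_0"
  assumes S: "is_char S"
  shows "pair S (euler_w w) = (\<Sum>n\<in>{1..length w}. ((-1) ^ (n - 1) / of_nat n) * cpow n (\<lambda>z. S z - eps z) w)"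
proof -
  have "pair S (euler_w w) = (\<Sum>z\<in>perms w. S z * euler_w w z)"
    using supp_euler[of w] perms_finite by (intro pair_superset) (auto simp: supp_def)
  also have "\<dots> = (\<Sum>n\<in>{1..length w}. ((-1) ^ (n - 1) / of_nat n) *
       (\<Sum>ps\<in>decomps n w. (\<Sum>z\<in>perms w. S z * shuffle_list ps z)))"
  proof -
    have "S z * euler_w w z = (\<Sum>n\<in>{1..length w}. ((-1) ^ (n - 1) / of_nat n) *
       (\<Sum>ps\<in>decomps n w. S z * shuffle_list ps z))" for z
      by (simp add: euler_w_def sum_distrib_left mult.left_commute)
    then have "(\<Sum>z\<in>perms w. S z * euler_w w z) = (\<Sum>z\<in>perms w. \<Sum>n\<in>{1..length w}. ((-1) ^ (n - 1) / of_nat n) *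
       (\<Sum>ps\<in>decomps n w. S z * shuffle_list ps z))" by simp
    also have "\<dots> = (\<Sum>n\<in>{1..length w}. \<Sum>z\<in>perms w. ((-1) ^ (n - 1) / of_nat n) *
       (\<Sum>ps\<in>decomps n w. S z * shuffle_list ps z))" by (rule sum.swap)
    also have "\<dots> = (\<Sum>n\<in>{1..length w}. ((-1) ^ (n - 1) / of_nat n) *
       (\<Sum>ps\<in>decomps n w. (\<Sum>z\<in>perms w. S z * shuffle_list ps z)))"
      by (intro sum.cong refl) (rule sum_swap_mult)
    finally show ?thesis .
  qed
  also have "\<dots> = (\<Sum>n\<in>{1..length w}. ((-1) ^ (n - 1) / of_nat n) *
       (\<Sum>ps\<in>decomps n w. prod_list (map (\<lambda>z. S z - eps z) ps)))"
  proof (intro sum.cong refl arg_cong2[where f="(*)"])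
    fix n ps assume ps: "ps \<in> decomps n w"
    have "(\<Sum>z\<in>perms w. S z * shuffle_list ps z) = pair S (shuffle_list ps)"
      using supp_shuffle_list[of ps] perms_finite ps
      by (intro pair_superset[symmetric]) (auto simp: supp_def decomps_def)
    also have "\<dots> = prod_list (map S ps)" by (rule pair_shuffle_list[OF S])
    also have "\<dots> = prod_list (map (\<lambda>z. S z - eps z) ps)"
      using ps by (intro arg_cong[where f=prod_list] map_cong refl) (auto simp: decomps_def eps_def)
    finally show "(\<Sum>z\<in>perms w. S z * shuffle_list ps z) = prod_list (map (\<lambda>z. S z - eps z) ps)" .
  qed
  also have "\<dots> = (\<Sum>n\<in>{1..length w}. ((-1) ^ (n - 1) / of_nat n) * cpow n (\<lambda>z. S z - eps z) w)"
    using S by (simp add: sum_decomps is_char_def eps_def)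
  finally show ?thesis .
qed

lemma length_le_ht: "(\<forall>I\<in>set w. I \<noteq> {#}) \<Longrightarrow> length w \<le> ht w"
proof (induction w)
  case (Cons I w)
  then have "1 \<le> size I" by (simp add: Suc_le_eq nonempty_has_size)
  then show ?case using Cons by (simp add: ht_def)
qed (simp add: ht_def)

lemma pair_euler_Lg:
  fixes S :: "word \<Rightarrow> 'k::field_char_0"
  assumes S: "is_char S" and w: "\<forall>I\<in>set w. I \<noteq> {#}" "ht w \<le> h"
  shows "pair S (euler_w w) = Lg h S w"
proof -
  have lw: "length w \<le> h" using length_le_ht[OF w(1)] w(2) by simp
  have "Lg h S w = (\<Sum>n\<in>{1..length w}. ((-1) ^ (n - 1) / of_nat n) * cpow n (\<lambda>z. S z - eps z) w)"
    unfolding Lg_def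
  proof (rule sum.mono_neutral_right)
    show "{1..length w} \<subseteq> {1..h}" using lw by auto
    show "\<forall>i\<in>{1..h} - {1..length w}. ((-1) ^ (i - 1) / of_nat i) * cpow i (\<lambda>z. S z - eps z) w = 0"
      using S by (auto simp: cpow_zero is_char_def eps_def)
  qed simp
  then show ?thesis using pair_euler[OF S] by simp
qed

lemma pair_lin:
  fixes q :: "word \<Rightarrow> 'k::comm_ring_1"
  assumes fq: "finite (supp q)" and ff: "\<And>w. w \<in> supp q \<Longrightarrow> finite (supp (f w))"
  shows "pair S (lin f q) = (\<Sum>w\<in>supp q. q w * pair S (f w))"
proof -
  let ?F = "\<Union>w\<in>supp q. supp (f w)"
  have fF: "finite ?F" using fq ff by auto
  have sub: "{u. lin f q u \<noteq> 0} \<subseteq> ?F"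
  proof
    fix u assume "u \<in> {u. lin f q u \<noteq> 0}"
    then have "(\<Sum>w\<in>supp q. q w * f w u) \<noteq> 0" by (simp add: lin_def supp_def)
    then obtain w where "w \<in> supp q" "q w * f w u \<noteq> 0"
      using sum.not_neutral_contains_not_neutral by blast
    then show "u \<in> ?F" by (auto simp: supp_def)
  qed
  have "pair S (lin f q) = (\<Sum>u\<in>?F. S u * lin f q u)" by (rule pair_superset[OF fF sub])
  also have "\<dots> = (\<Sum>w\<in>supp q. q w * (\<Sum>u\<in>?F. S u * f w u))"
    unfolding lin_def supp_def[symmetric]
    by (simp add: sum_distrib_left algebra_simps sum.swap[of _ ?F])
  also have "\<dots> = (\<Sum>w\<in>supp q. q w * pair S (f w))"
  proof (intro sum.cong refl arg_cong2[where f="(*)"])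
    fix w assume "w \<in> supp q"
    then show "(\<Sum>u\<in>?F. S u * f w u) = pair S (f w)"
      using fF by (intro pair_superset[symmetric]) (auto simp: supp_def)
  qed
  finally show ?thesis .
qed

lemma supp_hoffman_finite: "finite (supp (hoffman w :: word \<Rightarrow> 'k::field_char_0))"
proof -
  have "supp (hoffman w :: word \<Rightarrow> 'k) \<subseteq> (\<lambda>\<alpha>. contract \<alpha> w) ` comps (length w)"
  proof
    fix u assume "u \<in> supp (hoffman w :: word \<Rightarrow> 'k)"
    then have "(\<Sum>\<alpha>\<in>comps (length w). if contract \<alpha> w = u then 1 / of_nat (prod_list (map fact \<alpha>)) else (0::'k)) \<noteq> 0"
      by (simp add: hoffman_def supp_def)
    then obtain \<alpha> where "\<alpha> \<in> comps (length w)" "(if contract \<alpha> w = u then 1 / of_nat (prod_list (map fact \<alpha>)) else (0::'k)) \<noteq> 0"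
      using sum.not_neutral_contains_not_neutral by blast
    then show "u \<in> (\<lambda>\<alpha>. contract \<alpha> w) ` comps (length w)" by (auto split: if_splits)
  qed
  then show ?thesis using comps_finite finite_subset by blast
qed


definition lmul :: "'a \<Rightarrow> ('a list \<Rightarrow> 'k::comm_ring_1) \<Rightarrow> 'a list \<Rightarrow> 'k" where
  "lmul a P z = (if z \<noteq> [] \<and> hd z = a then P (tl z) else 0)"

definition rmul :: "'a \<Rightarrow> ('a list \<Rightarrow> 'k::comm_ring_1) \<Rightarrow> 'a list \<Rightarrow> 'k" where
  "rmul a P z = (if z \<noteq> [] \<and> last z = a then P (butlast z) else 0)"

fun lieU :: "'a list \<Rightarrow> 'a list \<Rightarrow> 'k::comm_ring_1" where
  "lieU [] = (\<lambda>_. 0)"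
| "lieU [a] = (\<lambda>z. if z = [a] then 1 else 0)"
| "lieU (a # b # u) = (\<lambda>z. lmul a (lieU (b # u)) z - rmul a (lieU (b # u)) z)"

lemma lieU_int: "(lieU u z :: 'k::comm_ring_1) = of_int (lieU u z)"
  by (induction u arbitrary: z rule: lieU.induct) (auto simp: lmul_def rmul_def)

lemma lieU_supp: "lieU u z \<noteq> (0::'k::comm_ring_1) \<Longrightarrow> mset z = mset u"
proof (induction u arbitrary: z rule: lieU.induct)
  case (3 a b u)
  show ?case
  proof (cases "lmul a (lieU (b # u)) z \<noteq> (0::'k)")
    case True
    then have z: "z \<noteq> []" "hd z = a" "lieU (b # u) (tl z) \<noteq> (0::'k)" by (auto simp: lmul_def split: if_splits)
    then have "mset (tl z) = mset (b # u)" using "3.IH" by blast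
    moreover have "z = hd z # tl z" using z(1) by (cases z) auto
    ultimately show ?thesis using z by (metis mset.simps(2))
  next
    case False
    then have "rmul a (lieU (b # u)) z \<noteq> (0::'k)" using "3.prems" by auto
    then have z: "z \<noteq> []" "last z = a" "lieU (b # u) (butlast z) \<noteq> (0::'k)" by (auto simp: rmul_def split: if_splits)
    then have "mset (butlast z) = mset (b # u)" using "3.IH" by blast
    moreover have "z = butlast z @ [last z]" using z(1) by (rule append_butlast_last_id[symmetric])
    ultimately show ?thesis using z by (metis mset.simps(2) mset_append mset_single_iff add_mset_add_single union_commute)
  qed
qed (auto split: if_splits)

lemma ht_mset: "mset z = mset u \<Longrightarrow> ht z = ht u"
  unfolding ht_def by (metis mset_map sum_mset_sum_list)

lemma conc_wordp_left: "(\<Sum>k\<le>length z. wordp [e] (take k z) * P (drop k z)) = lmul e P z"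
proof (cases z)
  case Nil
  then show ?thesis by (simp add: wordp_def lmul_def)
next
  case (Cons c z')
  have "(\<Sum>k\<le>length z. wordp [e] (take k z) * P (drop k z)) =
      (\<Sum>j\<le>length z'. if j = 0 then (if c = e then P z' else 0) else 0)"
  proof -
    have "(\<Sum>k\<le>length z. wordp [e] (take k z) * P (drop k z)) =
       (\<Sum>j\<le>length z'. wordp [e] (c # take j z') * P (drop j z'))"
      unfolding Cons by (simp add: sum.atMost_Suc_shift wordp_def del: sum.atMost_Suc)
    also have "\<dots> = (\<Sum>j\<le>length z'. if j = 0 then (if c = e then P z' else 0) else 0)"
      by (intro sum.cong refl) (auto simp: wordp_def)
    finally show ?thesis .
  qed
  also have "\<dots> = (if c = e then P z' else 0)" by simp
  finally show ?thesis using Cons by (simp add: lmul_def)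
qed

lemma conc_wordp_right: "(\<Sum>k\<le>length z. P (take k z) * wordp [e] (drop k z)) = rmul e P z"
proof (cases z rule: rev_cases)
  case Nil
  then show ?thesis by (simp add: wordp_def rmul_def)
next
  case (snoc z' c)
  have "(\<Sum>k\<le>length z. P (take k z) * wordp [e] (drop k z)) =
      (\<Sum>k\<le>length z. if k = length z' then (if c = e then P z' else 0) else 0)"
  proof (intro sum.cong refl)
    fix k assume k: "k \<in> {..length z}"
    show "P (take k z) * wordp [e] (drop k z) = (if k = length z' then (if c = e then P z' else 0) else 0)"
    proof (cases "k \<le> length z'")
      case True
      then have "drop k z = drop k z' @ [c]" using snoc by simp
      moreover have "(drop k z' @ [c] = [e]) = (k = length z' \<and> c = e)" using True by auto
      ultimately show ?thesis using snoc by (auto simp: wordp_def)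
    next
      case False
      then have "drop k z = []" using snoc k by simp
      then show ?thesis using False by (auto simp: wordp_def)
    qed
  qed
  also have "\<dots> = (if c = e then P z' else 0)" using snoc by simp
  finally show ?thesis using snoc by (simp add: rmul_def)
qed

lemma lie_lieU: "ht u \<le> h \<Longrightarrow> (lie h u :: 'k::comm_ring_1 ser) = lieU u"
proof (induction h u rule: lie.induct)
  case (2 h I)
  then show ?case by (auto simp: wordp_def)
next
  case (3 h e e' u)
  have IH: "(lie h (e' # u) :: 'k ser) = lieU (e' # u)" using 3 by (simp add: ht_def)
  show ?case
  proof
    fix z
    show "(lie h (e # e' # u) :: 'k ser) z = lieU (e # e' # u) z"
    proof (cases "ht z \<le> h")
      case True
      then show ?thesis using IH
        by (simp add: bracket_def conc_h_def conc_wordp_left conc_wordp_right)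
    next
      case False
      then have "lieU (e # e' # u) z = (0::'k)"
        using lieU_supp[of "e # e' # u" z] ht_mset[of z "e # e' # u"] "3.prems" by auto
      then show ?thesis using False by (simp add: bracket_def conc_h_def)
    qed
  qed
qed simp

lemma count_SH_mset: "count (SH p q) u \<noteq> 0 \<Longrightarrow> mset u = mset p + mset q"
  by (simp add: count_eq_zero_iff mset_SH)

lemma A_ID:
  assumes w: "w \<noteq> []"
  shows "(\<Sum>i\<le>length w. (-1) ^ (length w - i) * of_nat (count (SH (take i w) (rev (drop i w))) t)) = (0::'k::comm_ring_1)"
proof (cases t rule: rev_cases)
  case Nil
  then show ?thesis using w by (auto simp: count_SH_Nil intro!: sum.neutral)
next
  case (snoc t' b)
  obtain m where n: "length w = Suc m" using w by (cases "length w") auto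
  define C where "C j = (of_nat (count (SH (take j w) (rev (drop (Suc j) w))) t') :: 'k)" for j
  have tm: "(-1) ^ (length w - i) * of_nat (count (SH (take i w) (rev (drop i w))) t) =
      (if 0 < i \<and> w ! (i - 1) = b then (-1) ^ (length w - i) * C (i - 1) else 0) +
      (if i < length w \<and> w ! i = b then (-1) ^ (length w - i) * C i else 0)" if i: "i \<le> length w" for i
  proof -
    have p1: "(take i w \<noteq> [] \<and> last (take i w) = b) = (0 < i \<and> w ! (i - 1) = b)"
      using i w by (cases i) (auto simp: last_conv_nth min_def)
    have p2: "butlast (take i w) = take (i - 1) w" using i by (simp add: butlast_take)
    have q1: "(rev (drop i w) \<noteq> [] \<and> last (rev (drop i w)) = b) = (i < length w \<and> w ! i = b)"
      using i by (auto simp: hd_drop_conv_nth last_rev)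
    have q2: "butlast (rev (drop i w)) = rev (drop (Suc i) w)"
      by (simp add: butlast_rev drop_Suc tl_drop)
    have cnt: "count (SH (take i w) (rev (drop i w))) t =
       (if 0 < i \<and> w ! (i - 1) = b then count (SH (take (i - 1) w) (rev (drop i w))) t' else 0) +
       (if i < length w \<and> w ! i = b then count (SH (take i w) (rev (drop (Suc i) w))) t' else 0)"
      unfolding snoc count_SH_snoc p1 q1 p2 q2 by simp
    have C1: "0 < i \<Longrightarrow> C (i - Suc 0) = of_nat (count (SH (take (i - Suc 0) w) (rev (drop i w))) t')"
      by (simp add: C_def)
    have C2: "C i = of_nat (count (SH (take i w) (rev (drop (Suc i) w))) t')" by (simp add: C_def)
    show ?thesis unfolding cnt of_nat_add distrib_left C2
      by (cases "0 < i") (simp_all add: C1)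
  qed
  have "(\<Sum>i\<le>length w. (-1) ^ (length w - i) * of_nat (count (SH (take i w) (rev (drop i w))) t)) =
      (\<Sum>i\<le>length w. (if 0 < i \<and> w ! (i - 1) = b then (-1) ^ (length w - i) * C (i - 1) else 0)) +
      (\<Sum>i\<le>length w. (if i < length w \<and> w ! i = b then (-1) ^ (length w - i) * C i else 0))"
    by (simp add: tm sum.distrib)
  also have "(\<Sum>i\<le>length w. (if 0 < i \<and> w ! (i - 1) = b then (-1) ^ (length w - i) * C (i - 1) else 0)) =
      (\<Sum>j<length w. (if w ! j = b then (-1) ^ (length w - Suc j) * C j else 0))"
    unfolding n by (simp add: sum.atMost_Suc_shift lessThan_Suc_atMost diff_Suc_1 del: sum.atMost_Suc cong: if_cong)
  also have "(\<Sum>i\<le>length w. (if i < length w \<and> w ! i = b then (-1) ^ (length w - i) * C i else 0)) =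
      (\<Sum>j<length w. (if w ! j = b then (-1) ^ (length w - j) * C j else 0))"
    unfolding n by (simp add: lessThan_Suc_atMost[symmetric])
  also have "(\<Sum>j<length w. (if w ! j = b then (-1) ^ (length w - Suc j) * C j else 0)) +
      (\<Sum>j<length w. (if w ! j = b then (-1) ^ (length w - j) * C j else 0)) = 0"
  proof -
    have "(if w ! j = b then (-1) ^ (length w - Suc j) * C j else 0) +
      (if w ! j = b then (-1) ^ (length w - j) * C j else 0) = (0::'k)" if "j < length w" for j
    proof -
      have "length w - j = Suc (length w - Suc j)" using that by simp
      then show ?thesis by simp
    qed
    then show ?thesis by (simp add: sum.distrib[symmetric])
  qed
  finally show ?thesis .
qed


definition cc :: "nat \<Rightarrow> 'k::comm_ring_1" where
  "cc k = - ((-1) ^ k * of_nat k)"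

lemma cc_Suc: "cc (Suc k) = - cc k + (-1) ^ k"
  by (simp add: cc_def algebra_simps)

lemma cc_0[simp]: "cc 0 = 0" by (simp add: cc_def)

abbreviation XX :: "'a list \<Rightarrow> nat \<Rightarrow> 'a list \<Rightarrow> 'k::comm_ring_1" where
  "XX z i u \<equiv> of_nat (count (SH (take i z) (rev (drop i z))) u)"

lemma tl_rev': "tl (rev xs) = rev (butlast xs)"
  by (induction xs rule: rev_induct) auto

lemma ID:
  "u \<noteq> [] \<Longrightarrow> (lieU u z :: 'k::comm_ring_1) = (\<Sum>i\<le>length z. cc (length z - i) * XX z i u)"
proof (induction u arbitrary: z rule: lieU.induct)
  case 1
  then show ?case by simp
next
  case (2 a)
  show ?case
  proof (cases "z = [a]")
    case True
    then show ?thesis by (simp add: cc_def)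
  next
    case False
    have "XX z i [a] = (0::'k)" for i
    proof (rule ccontr)
      assume "XX z i [a] \<noteq> (0::'k)"
      then have "count (SH (take i z) (rev (drop i z))) [a] \<noteq> 0" by (metis of_nat_0)
      then have "mset [a] = mset (take i z) + mset (rev (drop i z))" by (rule count_SH_mset)
      then have "mset z = {#a#}" by (metis append_take_drop_id mset_append mset_rev mset.simps)
      then show False using False by simp
    qed
    then show ?thesis using False by simp
  qed
next
  case (3 a b u)
  let ?u = "b # u"
  have IH: "(lieU ?u y :: 'k) = (\<Sum>i\<le>length y. cc (length y - i) * XX y i ?u)" for y
    using "3.IH" by simp
  show ?case
  proof (cases z)
    case Nil
    then show ?thesis by (simp add: lmul_def rmul_def)
  next
    case (Cons c z')
    define n where "n = length z'"
    define zb where "zb = butlast z"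
    have lz: "length z = Suc n" using Cons n_def by simp
    have lzb: "length zb = n" using lz zb_def by simp
    define G1 where "G1 i = (if take i z \<noteq> [] \<and> hd (take i z) = a
        then (of_nat (count (SH (tl (take i z)) (rev (drop i z))) ?u) :: 'k) else 0)" for i
    define G2 where "G2 i = (if rev (drop i z) \<noteq> [] \<and> hd (rev (drop i z)) = a
        then (of_nat (count (SH (take i z) (tl (rev (drop i z)))) ?u) :: 'k) else 0)" for i
    have X: "XX z i (a # ?u) = G1 i + G2 i" for i
      unfolding G1_def G2_def count_SH_Cons by simp
    have S1: "(\<Sum>i\<le>length z. cc (length z - i) * G1 i) = lmul a (lieU ?u) z"
    proof -
      have "(\<Sum>i\<le>length z. cc (length z - i) * G1 i) = (\<Sum>j\<le>n. cc (n - j) * G1 (Suc j))"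
        unfolding lz by (simp add: sum.atMost_Suc_shift G1_def del: sum.atMost_Suc)
      also have "\<dots> = (\<Sum>j\<le>n. if c = a then cc (n - j) * XX z' j ?u else 0)"
        by (intro sum.cong refl) (simp add: G1_def Cons)
      also have "\<dots> = (if c = a then lieU ?u z' else 0)"
        using IH[of z'] by (simp add: n_def)
      finally show ?thesis by (simp add: lmul_def Cons)
    qed
    have S2: "(\<Sum>i\<le>length z. cc (length z - i) * G2 i) = - rmul a (lieU ?u) z"
    proof -
      have G2n: "G2 (Suc n) = 0" using lz by (simp add: G2_def)
      have G2i: "G2 i = (if last z = a then XX zb i ?u else 0)" if "i \<le> n" for i
      proof -
        have i: "i < length z" using that lz by simp
        have "rev (drop i z) \<noteq> []" using i by simp
        moreover have "hd (rev (drop i z)) = last z" using i by (simp add: hd_rev)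
        moreover have "tl (rev (drop i z)) = rev (drop i zb)" by (simp add: tl_rev' butlast_drop zb_def)
        moreover have "take i z = take i zb" using i by (simp add: take_butlast zb_def)
        ultimately show ?thesis by (simp add: G2_def)
      qed
      have "(\<Sum>i\<le>length z. cc (length z - i) * G2 i) = (\<Sum>i\<le>n. cc (Suc n - i) * G2 i)"
        unfolding lz by (simp add: G2n)
      also have "\<dots> = (\<Sum>i\<le>n. if last z = a then cc (Suc (n - i)) * XX zb i ?u else 0)"
        by (intro sum.cong refl) (simp add: G2i Suc_diff_le)
      also have "\<dots> = (if last z = a then (\<Sum>i\<le>n. - (cc (n - i) * XX zb i ?u) + (-1) ^ (n - i) * XX zb i ?u) else 0)"
        by (simp add: cc_Suc algebra_simps)
      also have "\<dots> = (if last z = a then - lieU ?u zb + (\<Sum>i\<le>n. (-1) ^ (n - i) * XX zb i ?u) else 0)"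
        using IH[of zb] lzb by (simp add: sum.distrib sum_negf sum_subtractf)
      also have "(\<Sum>i\<le>n. (-1) ^ (n - i) * XX zb i ?u) = (0::'k)"
      proof (cases "zb = []")
        case True
        then show ?thesis using lzb by simp
      next
        case False
        then show ?thesis using A_ID[of zb ?u] lzb by simp
      qed
      finally show ?thesis by (simp add: rmul_def zb_def Cons)
    qed
    have "(\<Sum>i\<le>length z. cc (length z - i) * XX z i (a # ?u)) =
        (\<Sum>i\<le>length z. cc (length z - i) * G1 i) + (\<Sum>i\<le>length z. cc (length z - i) * G2 i)"
      by (simp add: X distrib_left sum.distrib)
    then show ?thesis using S1 S2 by simp
  qed
qed


lemma sum_two_ends:
  fixes n :: nat
  assumes "0 < n" "\<And>i. 0 < i \<Longrightarrow> i < n \<Longrightarrow> f i = 0"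
  shows "(\<Sum>i\<le>n. f i) = f 0 + (f n :: 'k::comm_monoid_add)"
proof -
  have "(\<Sum>i\<le>n. f i) = (\<Sum>i\<in>{0, n}. f i)"
  proof (rule sum.mono_neutral_right)
    show "\<forall>i\<in>{..n} - {0, n}. f i = 0"
    proof
      fix i assume "i \<in> {..n} - {0, n}"
      then have "0 < i" "i < n" by auto
      then show "f i = 0" by (rule assms(2))
    qed
  qed auto
  then show ?thesis using assms(1) by simp
qed

lemma KEY:
  fixes L :: "'a list \<Rightarrow> 'k::comm_ring_1"
  assumes n2: "2 \<le> length z0"
    and H1: "\<And>p q. p \<noteq> [] \<Longrightarrow> q \<noteq> [] \<Longrightarrow> mset p + mset q = mset z0 \<Longrightarrow> shv L p q = 0"
    and z: "z \<in> perms z0"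
  shows "(\<Sum>u\<in>perms z0. lieU u z * L u) = of_nat (length z0) * L z"
proof -
  let ?Z = "perms z0"
  define n where "n = length z0"
  have mz: "mset z = mset z0" using z by (simp add: perms_def)
  have lz: "length z = n" using mz n_def by (metis size_mset)
  have n0: "0 < n" using n2 n_def by linarith
  define T where "T i = shv L (take i z) (rev (drop i z))" for i
  have TZ: "T i = (\<Sum>u\<in>?Z. XX z i u * L u)" for i
  proof -
    have "set_mset (SH (take i z) (rev (drop i z))) \<subseteq> ?Z"
    proof
      fix y assume "y \<in># SH (take i z) (rev (drop i z))"
      then have "mset y = mset (take i z) + mset (rev (drop i z))" by (rule mset_SH)
      also have "\<dots> = mset z" by (metis append_take_drop_id mset_append mset_rev)
      finally show "y \<in> ?Z" using mz by (simp add: perms_def)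
    qed
    then show ?thesis unfolding T_def shv_def by (rule sum_mset_image_count[OF perms_finite])
  qed
  have T0: "T 0 = L (rev z)" by (simp add: T_def)
  have Tn: "T n = L z" using lz by (simp add: T_def)
  have Tmid: "T i = 0" if "0 < i" "i < n" for i
    unfolding T_def
  proof (rule H1)
    show "take i z \<noteq> []" using that lz by (cases z) auto
    show "rev (drop i z) \<noteq> []" using that lz by simp
    show "mset (take i z) + mset (rev (drop i z)) = mset z0"
      using mz by (metis append_take_drop_id mset_append mset_rev)
  qed
  have "(\<Sum>u\<in>?Z. lieU u z * L u) = (\<Sum>u\<in>?Z. \<Sum>i\<le>n. cc (n - i) * (XX z i u * L u))"
  proof (intro sum.cong refl)
    fix u assume "u \<in> ?Z"
    then have "u \<noteq> []" using n0 n_def by (auto simp: perms_def)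
    then have "lieU u z * L u = (\<Sum>i\<le>n. cc (n - i) * XX z i u) * L u"
      using ID[of u z, where 'k='k] lz by simp
    then show "lieU u z * L u = (\<Sum>i\<le>n. cc (n - i) * (XX z i u * L u))"
      by (simp add: sum_distrib_right mult.assoc)
  qed
  also have "\<dots> = (\<Sum>i\<le>n. cc (n - i) * T i)"
    by (subst sum.swap) (simp add: TZ sum_distrib_left)
  also have "\<dots> = cc n * T 0"
    using sum_two_ends[OF n0, of "\<lambda>i. cc (n - i) * T i"] Tmid by simp
  finally have K: "(\<Sum>u\<in>?Z. lieU u z * L u) = cc n * L (rev z)" using T0 by simp
  have "(\<Sum>i\<le>n. (-1) ^ (n - i) * T i) = (\<Sum>u\<in>?Z. L u * (\<Sum>i\<le>n. (-1) ^ (n - i) * XX z i u))"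
  proof -
    have "(\<Sum>i\<le>n. (-1) ^ (n - i) * T i) = (\<Sum>i\<le>n. \<Sum>u\<in>?Z. (-1) ^ (n - i) * (XX z i u * L u))"
      by (simp add: TZ sum_distrib_left)
    also have "\<dots> = (\<Sum>u\<in>?Z. \<Sum>i\<le>n. (-1) ^ (n - i) * (XX z i u * L u))" by (rule sum.swap)
    also have "\<dots> = (\<Sum>u\<in>?Z. L u * (\<Sum>i\<le>n. (-1) ^ (n - i) * XX z i u))"
      by (simp add: sum_distrib_left algebra_simps)
    finally show ?thesis .
  qed
  also have "\<dots> = 0"
  proof -
    have "z \<noteq> []" using lz n0 by auto
    then have "(\<Sum>i\<le>n. (-1) ^ (n - i) * XX z i u) = (0::'k)" for u
      using A_ID[of z u] lz by simp
    then show ?thesis by simp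
  qed
  finally have "(\<Sum>i\<le>n. (-1) ^ (n - i) * T i) = 0" .
  then have "(-1) ^ n * L (rev z) + L z = 0"
    using sum_two_ends[OF n0, of "\<lambda>i. (-1) ^ (n - i) * T i"] Tmid T0 Tn by simp
  then have "L z = - ((-1) ^ n * L (rev z))" by (simp add: eq_neg_iff_add_eq_0 add.commute)
  then show ?thesis unfolding K n_def[symmetric] by (simp add: cc_def algebra_simps)
qed

lemma N_ord:
  fixes L :: "'a list \<Rightarrow> 'r::linordered_field"
  assumes n2: "2 \<le> length z0"
    and H1: "\<And>p q. p \<noteq> [] \<Longrightarrow> q \<noteq> [] \<Longrightarrow> mset p + mset q = mset z0 \<Longrightarrow> shv L p q = 0"
    and H2: "\<And>u. u \<in> perms z0 \<Longrightarrow> (\<Sum>z\<in>perms z0. lieU u z * L z) = 0"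
  shows "L z0 = 0"
proof -
  let ?Z = "perms z0"
  have "(\<Sum>z\<in>?Z. of_nat (length z0) * (L z * L z)) = (\<Sum>z\<in>?Z. L z * (\<Sum>u\<in>?Z. lieU u z * L u))"
  proof (intro sum.cong refl)
    fix z assume z: "z \<in> ?Z"
    show "of_nat (length z0) * (L z * L z) = L z * (\<Sum>u\<in>?Z. lieU u z * L u)"
    proof -
      have k: "(\<Sum>u\<in>?Z. lieU u z * L u) = of_nat (length z0) * L z" by (rule KEY[OF n2 H1 z])
      show ?thesis unfolding k by (simp add: mult_ac)
    qed
  qed
  also have "\<dots> = (\<Sum>u\<in>?Z. L u * (\<Sum>z\<in>?Z. lieU u z * L z))"
  proof -
    have "(\<Sum>z\<in>?Z. L z * (\<Sum>u\<in>?Z. lieU u z * L u)) = (\<Sum>z\<in>?Z. \<Sum>u\<in>?Z. L z * (lieU u z * L u))"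
      by (simp only: sum_distrib_left)
    also have "\<dots> = (\<Sum>u\<in>?Z. \<Sum>z\<in>?Z. L z * (lieU u z * L u))" by (rule sum.swap)
    also have "\<dots> = (\<Sum>u\<in>?Z. L u * (\<Sum>z\<in>?Z. lieU u z * L z))"
      by (intro sum.cong refl) (simp add: sum_distrib_left mult_ac)
    finally show ?thesis .
  qed
  also have "\<dots> = 0" using H2 by simp
  finally have "of_nat (length z0) * (\<Sum>z\<in>?Z. L z * L z) = 0" by (simp add: sum_distrib_left)
  moreover have "z0 \<noteq> []" using n2 by (cases z0) auto
  then have "(0::'r) < of_nat (length z0)" by simp
  then have "(of_nat (length z0) :: 'r) \<noteq> 0" by (metis less_irrefl)
  ultimately have "(\<Sum>z\<in>?Z. L z * L z) = 0" by simp
  then have "\<forall>z\<in>?Z. L z * L z = 0"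
    using sum_nonneg_eq_0_iff[OF perms_finite[of z0], where f="\<lambda>z. L z * L z"] by simp
  moreover have "z0 \<in> ?Z" by (simp add: perms_def)
  ultimately show ?thesis by simp
qed

lemma exists_additive_rat:
  fixes a :: "'k::field_char_0" assumes a: "a \<noteq> 0"
  shows "\<exists>\<phi>::'k \<Rightarrow> rat. (\<forall>x y. \<phi> (x+y) = \<phi> x + \<phi> y) \<and> \<phi> a \<noteq> 0"
proof -
  interpret V: vector_space "\<lambda>q::rat. \<lambda>x::'k. of_rat q * x"
    by unfold_locales (auto simp: algebra_simps of_rat_add of_rat_mult)
  have ind: "V.independent {a}" using a by (simp add: V.independent_insert)
  define B where "B = V.extend_basis {a}"
  have iB: "V.independent B" and sB: "V.span B = UNIV" and aB: "a \<in> B"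
    using V.independent_extend_basis[OF ind] V.span_extend_basis[OF ind] V.extend_basis_superset[OF ind]
    by (auto simp: B_def)
  define \<phi> where "\<phi> x = V.representation B x a" for x
  have "\<phi> (x+y) = \<phi> x + \<phi> y" for x y
    unfolding \<phi>_def using V.representation_add[OF iB, of y x] sB by auto
  moreover have "\<phi> a = 1" unfolding \<phi>_def using V.representation_basis[OF iB aB] by simp
  ultimately show ?thesis by (intro exI[of _ \<phi>]) auto
qed

lemma additive_props:
  fixes \<phi> :: "'k::comm_ring_1 \<Rightarrow> 'r::comm_ring_1"
  assumes add: "\<And>x y. \<phi> (x + y) = \<phi> x + \<phi> y"
  shows "\<phi> 0 = 0" and "\<phi> (- x) = - \<phi> x" and "\<phi> (of_int m * x) = of_int m * \<phi> x"
    and "\<phi> (sum g F) = (\<Sum>z\<in>F. \<phi> (g z))"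
    and "\<phi> (sum_mset (image_mset g M)) = sum_mset (image_mset (\<lambda>z. \<phi> (g z)) M)"
proof -
  show z: "\<phi> 0 = 0" using add[of 0 0] by simp
  show n: "\<phi> (- x) = - \<phi> x" for x
  proof -
    have "\<phi> x + \<phi> (- x) = 0" using add[of x "- x"] z by simp
    then show ?thesis by (metis neg_eq_iff_add_eq_0)
  qed
  have nat: "\<phi> (of_nat k * x) = of_nat k * \<phi> x" for k
    by (induction k) (simp_all add: z add algebra_simps)
  show "\<phi> (of_int m * x) = of_int m * \<phi> x"
  proof (cases m rule: int_cases)
    case (nonneg k) then show ?thesis using nat[of k] by simp
  next
    case (neg k)
    have "(of_int m :: 'k) = - of_nat (Suc k)" using neg by simp
    then have "of_int m * x = - (of_nat (Suc k) * x)" by (simp only: minus_mult_left)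
    then have "\<phi> (of_int m * x) = - (of_nat (Suc k) * \<phi> x)" using nat[of "Suc k"] n[of "of_nat (Suc k) * x"] by simp
    moreover have "(of_int m :: 'r) = - of_nat (Suc k)" using neg by simp
    ultimately show ?thesis by (simp only: minus_mult_left)
  qed
  show "\<phi> (sum g F) = (\<Sum>z\<in>F. \<phi> (g z))"
    by (induction F rule: infinite_finite_induct) (simp_all add: z add)
  show "\<phi> (sum_mset (image_mset g M)) = sum_mset (image_mset (\<lambda>z. \<phi> (g z)) M)"
    by (induction M) (simp_all add: z add)
qed

lemma N_thm:
  fixes L :: "'a list \<Rightarrow> 'k::field_char_0"
  assumes n2: "2 \<le> length z0"
    and H1: "\<And>p q. p \<noteq> [] \<Longrightarrow> q \<noteq> [] \<Longrightarrow> mset p + mset q = mset z0 \<Longrightarrow> shv L p q = 0"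
    and H2: "\<And>u. u \<in> perms z0 \<Longrightarrow> (\<Sum>z\<in>perms z0. lieU u z * L z) = 0"
  shows "L z0 = 0"
proof (rule ccontr)
  assume "L z0 \<noteq> 0"
  then obtain \<phi> :: "'k \<Rightarrow> rat" where add: "\<And>x y. \<phi> (x + y) = \<phi> x + \<phi> y" and nz: "\<phi> (L z0) \<noteq> 0"
    using exists_additive_rat by blast
  note P = additive_props[of \<phi>, OF add]
  define L' where "L' = (\<lambda>z. \<phi> (L z))"
  have "L' z0 = 0"
  proof (rule N_ord[OF n2])
    fix p q :: "'a list" assume "p \<noteq> []" "q \<noteq> []" "mset p + mset q = mset z0"
    then have "shv L p q = 0" by (rule H1)
    then have "\<phi> (sum_mset (image_mset L (SH p q))) = 0" using P(1) by (simp add: shv_def)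
    then show "shv L' p q = 0" using P(5)[of L "SH p q"] by (simp add: shv_def L'_def)
  next
    fix u assume u: "u \<in> perms z0"
    have "(\<Sum>z\<in>perms z0. lieU u z * L' z) = (\<Sum>z\<in>perms z0. \<phi> (of_int (lieU u z) * L z))"
      by (intro sum.cong refl) (simp add: L'_def P(3) lieU_int[where 'k=rat])
    also have "\<dots> = \<phi> (\<Sum>z\<in>perms z0. of_int (lieU u z) * L z)" by (simp add: P(4))
    also have "\<dots> = \<phi> (\<Sum>z\<in>perms z0. lieU u z * L z)" by (simp add: lieU_int[where 'k='k])
    also have "\<dots> = 0" using H2[OF u] P(1) by simp
    finally show "(\<Sum>z\<in>perms z0. lieU u z * L' z) = 0" .
  qed
  then show False using nz by (simp add: L'_def)
qed


lemma eps_char': "is_char (eps :: 'a list \<Rightarrow> 'k::comm_ring_1)"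
  using eps_char unfolding eps_def[abs_def] .

lemma cpow_char: "is_char S \<Longrightarrow> is_char (cpow k S)"
  by (induction k) (auto intro: conv_char eps_char')

lemma pascal_sum:
  fixes X :: "nat \<Rightarrow> 'k::comm_ring_1"
  shows "(\<Sum>j\<le>Suc k. of_nat (Suc k choose j) * X j) =
     (\<Sum>j\<le>k. of_nat (k choose j) * X j) + (\<Sum>j\<le>k. of_nat (k choose j) * X (Suc j))"
proof -
  have "(\<Sum>j\<le>Suc k. of_nat (Suc k choose j) * X j) = X 0 + (\<Sum>j\<le>k. of_nat (Suc k choose Suc j) * X (Suc j))"
    by (simp add: sum.atMost_Suc_shift del: sum.atMost_Suc)
  also have "\<dots> = (X 0 + (\<Sum>j\<le>k. of_nat (k choose Suc j) * X (Suc j))) + (\<Sum>j\<le>k. of_nat (k choose j) * X (Suc j))"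
    by (simp add: sum.distrib algebra_simps)
  also have "X 0 + (\<Sum>j\<le>k. of_nat (k choose Suc j) * X (Suc j)) = (\<Sum>j\<le>Suc k. of_nat (k choose j) * X j)"
    by (simp add: sum.atMost_Suc_shift del: sum.atMost_Suc)
  also have "\<dots> = (\<Sum>j\<le>k. of_nat (k choose j) * X j)" by (simp add: binomial_eq_0)
  finally show ?thesis .
qed

lemma BIN: "cpow k (\<lambda>z. A z + eps z) w = (\<Sum>j\<le>k. of_nat (k choose j) * cpow j A w)"
proof (induction k arbitrary: w)
  case 0
  then show ?case by simp
next
  case (Suc k)
  let ?S = "\<lambda>z. A z + eps z"
  have "cpow (Suc k) ?S w = (\<Sum>i\<le>length w. (A (take i w) + eps (take i w)) * (\<Sum>j\<le>k. of_nat (k choose j) * cpow j A (drop i w)))"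
    by (simp add: conv_def Suc.IH)
  also have "\<dots> = (\<Sum>i\<le>length w. A (take i w) * (\<Sum>j\<le>k. of_nat (k choose j) * cpow j A (drop i w)))
      + (\<Sum>i\<le>length w. eps (take i w) * (\<Sum>j\<le>k. of_nat (k choose j) * cpow j A (drop i w)))"
    by (simp add: distrib_right sum.distrib)
  also have "(\<Sum>i\<le>length w. eps (take i w) * (\<Sum>j\<le>k. of_nat (k choose j) * cpow j A (drop i w)))
      = (\<Sum>j\<le>k. of_nat (k choose j) * cpow j A w)"
  proof -
    have "(\<Sum>i\<le>length w. eps (take i w) * (\<Sum>j\<le>k. of_nat (k choose j) * cpow j A (drop i w)))
       = (\<Sum>i\<le>length w. if i = 0 then (\<Sum>j\<le>k. of_nat (k choose j) * cpow j A w) else 0)"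
      by (intro sum.cong refl) (auto simp: eps_def)
    then show ?thesis by simp
  qed
  also have "(\<Sum>i\<le>length w. A (take i w) * (\<Sum>j\<le>k. of_nat (k choose j) * cpow j A (drop i w)))
      = (\<Sum>j\<le>k. of_nat (k choose j) * cpow (Suc j) A w)"
    by (simp add: conv_def sum_distrib_left sum_distrib_right algebra_simps sum.swap[of _ "{..k}"])
  finally show ?case using pascal_sum[of k "\<lambda>j. cpow j A w"] by (simp add: add.commute)
qed

definition Bp :: "nat \<Rightarrow> 'k::field_char_0 poly" where
  "Bp j = smult (1 / fact j) (\<Prod>i<j. [:- of_nat i, 1:])"

lemma poly_Bp: "poly (Bp j) (of_nat k) = (of_nat (k choose j) :: 'k::field_char_0)"
proof -
  have "poly (Bp j) (of_nat k) = (\<Prod>i<j. (of_nat k - of_nat i :: 'k)) / fact j"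
    by (simp add: Bp_def poly_prod)
  also have "\<dots> = (of_nat k gchoose j)"
    by (simp add: gbinomial_prod_rev atLeast0LessThan)
  also have "\<dots> = of_nat (k choose j)" by (simp add: binomial_gbinomial)
  finally show ?thesis .
qed

lemma coeff_Bp_0: "coeff (Bp j) 0 = (if j = 0 then 1 else (0::'k::field_char_0))"
  using poly_Bp[of j 0] by (cases j) (simp_all add: poly_0_coeff_0)

lemma coeff_Bp_1: "coeff (Bp j) 1 = (if j = 0 then 0 else ((-1) ^ (j - 1) / of_nat j :: 'k::field_char_0))"
proof (cases j)
  case 0
  then show ?thesis by (simp add: Bp_def)
next
  case (Suc j')
  define Q where "Q = (\<Prod>i<j'. [:- of_nat (Suc i), 1:] :: 'k poly)"
  have "(\<Prod>i<j. [:- of_nat i, 1:] :: 'k poly) = [:0, 1:] * Q"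
    unfolding Suc Q_def by (simp add: prod.lessThan_Suc_shift del: prod.lessThan_Suc)
  also have "\<dots> = pCons 0 Q" by (simp add: mult_pCons_left)
  finally have P: "(\<Prod>i<j. [:- of_nat i, 1:] :: 'k poly) = pCons 0 Q" .
  have "coeff Q 0 = poly Q 0" by (simp add: poly_0_coeff_0)
  also have "\<dots> = (\<Prod>i<j'. - of_nat (Suc i) :: 'k)" by (simp add: Q_def poly_prod)
  also have "\<dots> = (-1) ^ j' * fact j'"
    by (induction j') (simp_all add: algebra_simps)
  finally have cQ: "coeff Q 0 = (-1) ^ j' * fact j'" .
  have "coeff (Bp j) 1 = (1 / fact j) * coeff Q 0"
    unfolding Bp_def P by simp
  also have "\<dots> = (1 / fact (Suc j')) * ((-1) ^ j' * fact j')" using cQ Suc by simp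
  also have "\<dots> = (-1) ^ j' / of_nat (Suc j')"
  proof -
    have f: "(fact (Suc j') :: 'k) = of_nat (Suc j') * fact j'" by (rule fact_Suc)
    have n1: "(fact j' :: 'k) \<noteq> 0" by simp
    have n2: "(of_nat (Suc j') :: 'k) \<noteq> 0" by (simp del: of_nat_Suc)
    show ?thesis unfolding f using n1 n2 by (simp add: field_simps del: of_nat_Suc)
  qed
  finally show ?thesis using Suc by simp
qed

definition Pw :: "(word \<Rightarrow> 'k::field_char_0) \<Rightarrow> word \<Rightarrow> 'k poly" where
  "Pw A w = (\<Sum>j\<le>length w. smult (cpow j A w) (Bp j))"

definition Lfull :: "(word \<Rightarrow> 'k::field_char_0) \<Rightarrow> word \<Rightarrow> 'k" where
  "Lfull S w = (\<Sum>n\<in>{1..length w}. ((-1) ^ (n - 1) / of_nat n) * cpow n (\<lambda>z. S z - eps z) w)"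

lemma poly_Pw:
  assumes A: "A [] = 0"
  shows "poly (Pw A w) (of_nat k) = cpow k (\<lambda>z. A z + eps z) w"
proof -
  let ?M = "length w + k"
  have "poly (Pw A w) (of_nat k) = (\<Sum>j\<le>length w. cpow j A w * of_nat (k choose j))"
    by (simp add: Pw_def poly_sum poly_Bp)
  also have "\<dots> = (\<Sum>j\<le>?M. cpow j A w * of_nat (k choose j))"
    using A by (intro sum.mono_neutral_left) (auto simp: cpow_zero)
  also have "\<dots> = (\<Sum>j\<le>?M. of_nat (k choose j) * cpow j A w)"
    by (simp add: mult.commute)
  also have "\<dots> = (\<Sum>j\<le>k. of_nat (k choose j) * cpow j A w)"
    by (rule sum.mono_neutral_right) (auto simp: binomial_eq_0)
  finally show ?thesis by (simp add: BIN)
qed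

lemma coeff_Bp_Suc0: "coeff (Bp j) (Suc 0) = (if j = 0 then 0 else ((-1) ^ (j - 1) / of_nat j :: 'k::field_char_0))"
  using coeff_Bp_1[of j] by simp

lemma coeff_Pw_0: "coeff (Pw A w) 0 = cpow 0 A w"
proof -
  have "coeff (Pw A w) 0 = (\<Sum>j\<le>length w. cpow j A w * (if j = 0 then 1 else 0))"
    by (simp add: Pw_def coeff_sum coeff_Bp_0)
  also have "\<dots> = (\<Sum>j\<le>length w. if j = 0 then cpow j A w else 0)"
    by (intro sum.cong refl) auto
  finally show ?thesis by simp
qed

lemma coeff_Pw_1: "coeff (Pw (\<lambda>z. S z - eps z) w) 1 = Lfull S w"
proof -
  have "coeff (Pw (\<lambda>z. S z - eps z) w) 1 = (\<Sum>j\<le>length w. cpow j (\<lambda>z. S z - eps z) w * (if j = 0 then 0 else (-1) ^ (j - 1) / of_nat j))"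
    by (simp add: Pw_def coeff_sum coeff_Bp_1 coeff_Bp_Suc0)
  also have "\<dots> = (\<Sum>j\<in>{1..length w}. cpow j (\<lambda>z. S z - eps z) w * ((-1) ^ (j - 1) / of_nat j))"
  proof -
    have "{..length w} = insert 0 {1..length w}" by auto
    then show ?thesis by (simp add: sum.insert)
  qed
  finally show ?thesis by (simp add: Lfull_def mult.commute)
qed

lemma coeff_Pw_Suc0: "coeff (Pw (\<lambda>z. S z - eps z) w) (Suc 0) = Lfull S w"
  using coeff_Pw_1 by simp

lemma poly_eq_nat:
  fixes P Q :: "'k::field_char_0 poly"
  assumes "\<And>k. poly P (of_nat k) = poly Q (of_nat k)"
  shows "P = Q"
proof (rule ccontr)
  assume "P \<noteq> Q"
  then have "P - Q \<noteq> 0" by simp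
  then have f: "finite {x. poly (P - Q) x = 0}" by (rule poly_roots_finite)
  have "range (of_nat :: nat \<Rightarrow> 'k) \<subseteq> {x. poly (P - Q) x = 0}" using assms by auto
  then have "finite (range (of_nat :: nat \<Rightarrow> 'k))" using f finite_subset by blast
  moreover have "inj (of_nat :: nat \<Rightarrow> 'k)" by (simp add: inj_on_def)
  ultimately show False using finite_imageD infinite_UNIV_nat by blast
qed

lemma Lfull_shuffle:
  fixes S :: "word \<Rightarrow> 'k::field_char_0"
  assumes S: "is_char S" and p: "p \<noteq> []" and q: "q \<noteq> []"
  shows "shv (Lfull S) p q = 0"
proof -
  let ?A = "\<lambda>z. S z - eps z"
  have A0: "?A [] = 0" using S by (simp add: is_char_def eps_def)
  have SA: "(\<lambda>z. ?A z + eps z) = S" by simp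
  let ?F = "set_mset (SH p q)"
  define Q where "Q = (\<Sum>z\<in>?F. smult (of_nat (count (SH p q) z)) (Pw ?A z))"
  define R where "R = Pw ?A p * Pw ?A q"
  have "poly Q (of_nat k) = poly R (of_nat k)" for k
  proof -
    have "poly Q (of_nat k) = (\<Sum>z\<in>?F. of_nat (count (SH p q) z) * cpow k S z)"
      by (simp add: Q_def poly_sum poly_Pw[of "\<lambda>z. S z - eps z", OF A0] SA)
    also have "\<dots> = shv (cpow k S) p q"
      unfolding shv_def by (rule sum_mset_image_count[symmetric]) auto
    also have "\<dots> = cpow k S p * cpow k S q"
      using cpow_char[OF S, of k] by (simp add: is_char_def)
    also have "\<dots> = poly R (of_nat k)" by (simp add: R_def poly_Pw[of "\<lambda>z. S z - eps z", OF A0] SA)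
    finally show ?thesis .
  qed
  then have QR: "Q = R" by (rule poly_eq_nat)
  have "coeff Q 1 = shv (Lfull S) p q"
    unfolding shv_def
    by (subst sum_mset_image_count[of ?F]) (auto simp: Q_def coeff_sum coeff_Pw_1 coeff_Pw_Suc0)
  moreover have "coeff R 1 = 0"
    using p q by (simp add: R_def coeff_mult coeff_Pw_0 coeff_Pw_1 eps_def)
  ultimately show ?thesis using QR by simp
qed

lemma Lg_Lfull: "length w \<le> h \<Longrightarrow> is_char S \<Longrightarrow> Lg h S w = Lfull S w"
  unfolding Lg_def Lfull_def
  by (rule sum.mono_neutral_right) (auto simp: cpow_zero is_char_def eps_def)


lemma is_word_perm: "is_word d w \<Longrightarrow> z \<in> perms w \<Longrightarrow> is_word d z"
  by (auto simp: is_word_def perms_def dest: mset_eq_setD)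

lemma perms_perm: "z \<in> perms w \<Longrightarrow> perms z = perms w"
  by (auto simp: perms_def)

lemma word_nonempty_letters: "is_word d w \<Longrightarrow> \<forall>I\<in>set w. I \<noteq> {#}"
  by (auto simp: is_word_def is_letter_def)

lemma supp_lin_sub:
  assumes "\<And>w'. w' \<in> supp p \<Longrightarrow> supp (f w') \<subseteq> P"
  shows "supp (lin f p) \<subseteq> P"
proof
  fix u assume "u \<in> supp (lin f p)"
  then have "(\<Sum>w\<in>{w. p w \<noteq> 0}. p w * f w u) \<noteq> 0" by (simp add: supp_def lin_def)
  then obtain w where "w \<in> {w. p w \<noteq> 0}" "p w * f w u \<noteq> 0"
    using sum.not_neutral_contains_not_neutral by blast
  then show "u \<in> P" using assms[of w] by (auto simp: supp_def)
qed

lemma F1: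
  fixes x :: "nat \<Rightarrow> nat \<Rightarrow> 'k::field_char_0"
  assumes w: "is_word d w" "ht w \<le> h"
  shows "pair (DS N x) (lin hoffman (lin euler_w (lie h w))) =
    (\<Sum>z\<in>perms w. lieU w z * Lg h (Sser x N) z)"
proof -
  let ?S = "Sser x N"
  let ?p = "lie h w :: 'k ser"
  let ?r = "lin euler_w ?p"
  have p: "?p = lieU w" by (rule lie_lieU[OF w(2)])
  have sp: "supp ?p \<subseteq> perms w"
    unfolding p by (auto simp: supp_def perms_def dest: lieU_supp)
  have fp: "finite (supp ?p)" using sp perms_finite finite_subset by blast
  have sr: "supp ?r \<subseteq> perms w"
  proof (rule supp_lin_sub)
    fix w' assume "w' \<in> supp ?p"
    then have "w' \<in> perms w" using sp by auto
    then show "supp (euler_w w' :: 'k ser) \<subseteq> perms w" using supp_euler[of w'] perms_perm by blast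
  qed
  have fr: "finite (supp ?r)" using sr perms_finite finite_subset by blast
  have "pair (DS N x) (lin hoffman ?r) = (\<Sum>w'\<in>supp ?r. ?r w' * pair (DS N x) (hoffman w'))"
    by (rule pair_lin[OF fr supp_hoffman_finite])
  also have "\<dots> = (\<Sum>w'\<in>supp ?r. ?S w' * ?r w')"
    by (intro sum.cong refl) (simp add: hoffman_DS[unfolded hoffman_adj_def] mult.commute)
  also have "\<dots> = pair ?S ?r" by (simp add: pair_def supp_def)
  also have "\<dots> = (\<Sum>w'\<in>supp ?p. ?p w' * pair ?S (euler_w w'))"
    by (rule pair_lin[OF fp]) (use perms_finite supp_euler finite_subset in blast)
  also have "\<dots> = (\<Sum>w'\<in>supp ?p. ?p w' * Lg h ?S w')"
  proof (intro sum.cong refl arg_cong2[where f="(*)"])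
    fix w' assume "w' \<in> supp ?p"
    then have w': "w' \<in> perms w" using sp by auto
    then have "is_word d w'" using is_word_perm w(1) by blast
    moreover have "ht w' = ht w" using w' ht_mset[of w' w] by (simp add: perms_def)
    ultimately show "pair ?S (euler_w w') = Lg h ?S w'"
      using pair_euler_Lg[OF Sser_char word_nonempty_letters[OF \<open>is_word d w'\<close>], of h] w(2) by simp
  qed
  also have "\<dots> = (\<Sum>z\<in>perms w. ?p z * Lg h ?S z)"
    using sp perms_finite by (intro sum.mono_neutral_left) (auto simp: supp_def)
  finally show ?thesis by (simp add: p)
qed

lemma comps_1: "comps (Suc 0) = {[Suc 0]}"
proof -
  have "(SIGMA i:{..<Suc 0}. comps i) = {(0, [])}" using comps_0 by auto
  then show ?thesis using comps_pos[of "Suc 0"] by simp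
qed

lemma F2:
  fixes x :: "nat \<Rightarrow> nat \<Rightarrow> 'k::field_char_0"
  assumes "1 \<le> h"
  shows "Lg h (Sser x N) [I] = DS N x [I]"
proof -
  let ?S = "Sser x N"
  let ?A = "\<lambda>z. ?S z - eps z"
  have A0: "?A [] = 0" by (simp add: eps_def)
  have "Lg h ?S [I] = (\<Sum>n\<in>{1..h}. if n = 1 then ?A [I] else 0)"
    unfolding Lg_def
  proof (intro sum.cong refl)
    fix n assume "n \<in> {1..h}"
    show "((-1) ^ (n - 1) / of_nat n) * cpow n ?A [I] = (if n = 1 then ?A [I] else 0)"
    proof (cases "n = 1")
      case True
      then show ?thesis by (simp add: conv_def eps_def)
    next
      case False
      then have "cpow n ?A [I] = 0" using \<open>n \<in> {1..h}\<close> A0 by (intro cpow_zero) auto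
      then show ?thesis using False by simp
    qed
  qed
  also have "\<dots> = ?A [I]" using assms by simp
  also have "\<dots> = ?S [I]" by (simp add: eps_def)
  also have "\<dots> = hoffman_adj (DS N x) [I]" by (simp add: hoffman_DS)
  also have "\<dots> = DS N x [I]" by (simp add: hoffman_adj_eq comps_1)
  finally show ?thesis .
qed

lemma F3:
  fixes x :: "nat \<Rightarrow> nat \<Rightarrow> 'k::field_char_0"
  assumes "p \<noteq> []" "q \<noteq> []" "length p + length q \<le> h"
  shows "shv (Lg h (Sser x N)) p q = 0"
proof -
  have "shv (Lg h (Sser x N)) p q = shv (Lfull (Sser x N)) p q"
    unfolding shv_def
  proof (intro arg_cong[where f=sum_mset] image_mset_cong)
    fix z assume "z \<in># SH p q"
    then have "length z = length p + length q" by (rule length_SH)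
    then have "length z \<le> h" using assms(3) by simp
    then show "Lg h (Sser x N) z = Lfull (Sser x N) z" using Lg_Lfull Sser_char by blast
  qed
  also have "\<dots> = 0" using Lfull_shuffle[OF Sser_char assms(1,2)] .
  finally show ?thesis .
qed

lemma Lg_Nil: "is_char S \<Longrightarrow> Lg h S [] = 0"
  unfolding Lg_def by (intro sum.neutral) (auto simp: cpow_zero eps_def is_char_def)

lemma v_zero: "in_Ad_deg d h v \<Longrightarrow> length w \<noteq> 1 \<Longrightarrow> v w = 0"
  unfolding in_Ad_deg_def by force

lemma main_equiv:
  fixes v :: "'k::field_char_0 ser" and x :: "nat \<Rightarrow> nat \<Rightarrow> 'k"
  assumes v_in: "in_Ad_deg d h v"
  shows "((\<forall>I. is_letter d I \<and> size I \<le> h \<longrightarrow> DS N x [I] = v [I]) \<and>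
     (\<forall>w. is_word d w \<and> ht w \<le> h \<and> 2 \<le> length w \<longrightarrow>
        pair (DS N x) (lin hoffman (lin euler_w (lie h w))) = 0))
    \<longleftrightarrow> (\<forall>w. is_word d w \<and> ht w \<le> h \<longrightarrow>
        logh h (hoffman_adj (trunc h (DS N x))) w = v w)"
  (is "?A \<longleftrightarrow> ?B")
proof
  let ?L = "Lg h (Sser x N)"
  assume A: ?A
  show ?B
  proof (intro allI impI)
    fix w assume w: "is_word d w \<and> ht w \<le> h"
    have "logh h (hoffman_adj (trunc h (DS N x))) w = ?L w" using L_eq w by blast
    also have "\<dots> = v w"
    proof (cases "length w")
      case 0
      then show ?thesis using v_zero[OF v_in, of w] by (simp add: Lg_Nil[OF Sser_char])
    next
      case (Suc m)
      show ?thesis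
      proof (cases m)
        case 0
        then obtain I where wI: "w = [I]" using Suc by (cases w) auto
        then have I: "is_letter d I" "size I \<le> h" using w by (auto simp: is_word_def ht_def)
        then have "1 \<le> h" by (auto simp: is_letter_def Suc_le_eq nonempty_has_size)
        then show ?thesis using A I wI F2 by metis
      next
        case (Suc m')
        have l2: "2 \<le> length w" using \<open>length w = Suc m\<close> Suc by simp
        have lh: "length w \<le> h" using length_le_ht[OF word_nonempty_letters] w by (meson le_trans)
        have "?L w = 0"
        proof (rule N_thm[OF l2])
          fix p q assume pq: "p \<noteq> []" "q \<noteq> []" "mset p + mset q = mset w"
          then have "length p + length q = length w" by (metis size_mset size_union)
          then show "shv ?L p q = 0" using F3[of p q h x N] pq lh by simp
        next
          fix u assume u: "u \<in> perms w"
          have uw: "is_word d u" "ht u \<le> h" "2 \<le> length u"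
            using is_word_perm[OF _ u] w ht_mset[of u w] u l2 mset_eq_length[of u w]
            by (auto simp: perms_def)
          then have "pair (DS N x) (lin hoffman (lin euler_w (lie h u))) = 0" using A by blast
          then show "(\<Sum>z\<in>perms w. lieU u z * ?L z) = 0"
            using F1[OF uw(1,2), where N=N and x=x] perms_perm[OF u] by simp
        qed
        moreover have "v w = 0" using v_zero[OF v_in] l2 by simp
        ultimately show ?thesis by simp
      qed
    qed
    finally show "logh h (hoffman_adj (trunc h (DS N x))) w = v w" .
  qed
next
  let ?L = "Lg h (Sser x N)"
  assume B: ?B
  have LB: "?L w = v w" if "is_word d w" "ht w \<le> h" for w
    using B L_eq that by metis
  show ?A
  proof (intro conjI allI impI)
    fix I assume I: "is_letter d I \<and> size I \<le> h"
    then have "1 \<le> h" by (auto simp: is_letter_def Suc_le_eq nonempty_has_size)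
    moreover have "is_word d [I]" "ht [I] \<le> h" using I by (auto simp: is_word_def ht_def)
    ultimately show "DS N x [I] = v [I]" using F2 LB by metis
  next
    fix w assume w: "is_word d w \<and> ht w \<le> h \<and> 2 \<le> length w"
    have "pair (DS N x) (lin hoffman (lin euler_w (lie h w))) = (\<Sum>z\<in>perms w. lieU w z * ?L z)"
      using F1 w by blast
    also have "\<dots> = 0"
    proof (intro sum.neutral ballI)
      fix z assume z: "z \<in> perms w"
      have "is_word d z" using is_word_perm w z by blast
      moreover have "ht z \<le> h" using ht_mset[of z w] z w by (simp add: perms_def)
      moreover have "length z = length w" using z mset_eq_length[of z w] by (simp add: perms_def)
      ultimately have "?L z = v z" "v z = 0" using LB[of z] v_zero[OF v_in, of z] w by auto
      then have "?L z = 0" by simp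
      then show "lieU w z * ?L z = 0" by simp
    qed
    finally show "pair (DS N x) (lin hoffman (lin euler_w (lie h w))) = 0" .
  qed
qed

theorem lemma5p3:
  fixes v :: "'k::field_char_0 ser" and d h N :: nat
  assumes alg_closed: "\<forall>p :: 'k poly. 0 < degree p \<longrightarrow> (\<exists>z. poly p z = 0)"
    and v_in: "in_Ad_deg d h v"
  shows "reachable d h N v \<longleftrightarrow>
    (\<exists>x. \<forall>w. is_word d w \<and> ht w \<le> h \<longrightarrow>
        logh h (hoffman_adj (trunc h (DS N x))) w = v w)"
  unfolding reachable_def using main_equiv[OF v_in] by blast


end
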